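(* Let $x_1,\dots,x_{n-1}>0$, $\gamma,\delta>0$, $\gamma\neq1\neq\delta$, set $x_0=1$, and for a matrix below let $\lambda=\lambda_{\max}$ denote its Perron eigenvalue and $\mathbf{w}^{EM}=(w_1,\dots,w_n)^T$ its principal right eigenvector. Then: Case 1 ($n\ge4$; matrix $\mathbf{P}$ with entries $x_{j-1}/x_{i-1}$ except $p_{12}=\delta x_1$, $p_{21}=1/(\delta x_1)$, $p_{13}=\gamma x_2$, $p_{31}=1/(\gamma x_2)$). $\mathbf{w}^{EM}$ can be taken as: $w_1=\delta\gamma\lambda(\lambda-n+1)$, $w_2=\frac1{x_1}[\gamma\lambda-(n-2)\gamma+\delta+(n-3)\delta\gamma]$, $w_3=\frac1{x_2}[\delta\lambda-(n-2)\delta+\gamma+(n-3)\delta\gamma]$, $w_i=\frac1{x_{i-1}}[\gamma+\delta+\delta\gamma\lambda-2\delta\gamma]$ ($i\ge4$). Moreover there are real constants $c_{11},c_{12},c_{13}$ such that $\mathbf{w}^{EM}=c_{11}\mathbf{u}=c_{12}\mathbf{v}=c_{13}\mathbf{z}$, where $u_1=x_1\gamma\lambda[\delta\lambda-(n-2)\delta+\gamma+n-3]$, $u_2=\gamma\lambda^3-(n-1)\gamma\lambda^2-(n-3)(\gamma^2-2\gamma+1)$, $u_3=\frac{x_1}{x_2}[\gamma\lambda^2-\gamma\lambda+\delta\lambda+(n-3)(\delta\gamma-\delta-\gamma+1)]$, $u_i=\frac{x_1}{x_{i-1}}[\gamma\lambda^2-\gamma\lambda-\gamma+\delta+\delta\gamma\lambda-\delta\gamma+\gamma^2]$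 ($i\ge4$); $v_1=x_2\delta\lambda[\delta+\gamma\lambda-(n-2)\gamma+n-3]$, $v_2=\frac{x_2}{x_1}[\delta\lambda^2-\delta\lambda+\gamma\lambda+(n-3)(\delta\gamma-\delta-\gamma+1)]$, $v_3=\delta\lambda^3-(n-1)\delta\lambda^2-(n-3)(\delta^2-2\delta+1)$, $v_i=\frac{x_2}{x_{i-1}}[\delta\lambda^2-\delta\lambda+\gamma-\delta+\delta^2+\delta\gamma\lambda-\delta\gamma]$ ($i\ge4$); $z_1=x_3\delta\gamma\lambda(\delta+\gamma+\lambda-2)$, $z_2=\frac{x_3}{x_1}[\delta\gamma\lambda^2-\delta\gamma\lambda+\gamma^2+\gamma\lambda-\gamma-\delta\gamma+\delta]$, $z_3=\frac{x_3}{x_2}[\delta\gamma\lambda^2-\delta\gamma\lambda-\delta\gamma+\gamma+\delta^2+\delta\lambda-\delta]$, $z_i=\frac{x_3}{x_{i-1}}[\delta\gamma\lambda^2-4\delta\gamma+\gamma+\delta+\delta^2\gamma+\gamma^2\delta]$ ($i\ge4$). Case 2A ($n=4$; matrix $\mathbf{Q}$ with entries $x_{j-1}/x_{i-1}$ except $q_{12}=\delta x_1$, $q_{21}=1/(\delta x_1)$, $q_{34}=\gamma x_3/x_2$, $q_{43}=x_2/(\gamma x_3)$). $\mathbf{w}^{EM}$ can be taken as: $w_1=\delta(\lambda^3\gamma-3\lambda^2\gamma-1+2\gamma-\gamma^2)$, $w_2=\frac1{x_1}[\lambda^2\gamma-2\lambda\gamma+\delta+2\lambda\delta\gamma-2\delta\gamma+\delta\gamma^2]$,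 $w_3=\frac{\gamma}{x_2}[\gamma+\lambda-1+\delta\lambda^2-2\lambda\delta+\delta+\lambda\delta\gamma-\delta\gamma]$, $w_4=\frac1{x_3}[1+\lambda\gamma-\gamma+\lambda\delta-\delta+\delta\gamma\lambda^2-2\lambda\delta\gamma+\delta\gamma]$. Moreover there are real $c_{21},c_{22},c_{23}$ with $\mathbf{w}^{EM}=c_{21}\mathbf{u}=c_{22}\mathbf{v}=c_{23}\mathbf{z}$, where $u_1=x_1[\delta\gamma\lambda^2-2\lambda\delta\gamma+1+2\lambda\gamma-2\gamma+\gamma^2]$, $u_2=\lambda^3\gamma-3\lambda^2\gamma-1+2\gamma-\gamma^2$, $u_3=\frac{x_1}{x_2}\gamma[\lambda\gamma+\lambda^2-2\lambda-\gamma+1+\lambda\delta-\delta+\delta\gamma]$, $u_4=\frac{x_1}{x_3}[\lambda+\lambda^2\gamma-2\lambda\gamma-1+\gamma+\delta+\lambda\delta\gamma-\delta\gamma]$; $v_1=x_2\delta(1+\lambda\gamma-\gamma)(\delta+\lambda-1)$, $v_2=\frac{x_2}{x_1}[1+\lambda\gamma-\gamma+\lambda\delta-\delta+\delta\gamma\lambda^2-2\lambda\delta\gamma+\delta\gamma]$, $v_3=\gamma(\delta\lambda^3-3\delta\lambda^2-1+2\delta-\delta^2)$, $v_4=\frac{x_2}{x_3}[2\lambda\delta\gamma+\delta\lambda^2-2\lambda\delta-2\delta\gamma+\gamma+\delta^2\gamma]$; $z_1=x_3\delta(\lambda\gamma+\lambda^2-2\lambda-\gamma+1+\lambda\delta-\delta+\delta\gamma)$,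 $z_2=\frac{x_3}{x_1}[\gamma+\lambda-1+\delta\lambda^2-2\lambda\delta+\delta+\lambda\delta\gamma-\delta\gamma]$, $z_3=\frac{x_3}{x_2}[2\lambda\delta+\delta\gamma\lambda^2-2\lambda\delta\gamma-2\delta+1+\delta^2]$, $z_4=\delta\lambda^3-3\delta\lambda^2-1+2\delta-\delta^2$. Case 2B ($n\ge5$; matrix $\mathbf{R}$ with entries $x_{j-1}/x_{i-1}$ except $r_{12}=\delta x_1$, $r_{21}=1/(\delta x_1)$, $r_{34}=\gamma x_3/x_2$, $r_{43}=x_2/(\gamma x_3)$). $\mathbf{w}^{EM}$ can be taken as: $w_1=\delta\lambda[\lambda^3\gamma-(n-1)\lambda^2\gamma-(n-3)(\gamma^2-2\gamma+1)]$, $w_2=\frac1{x_1}\{\lambda^3\gamma-(n-2)\lambda^2\gamma+(n-2)\delta\gamma\lambda^2+[\lambda\delta+(n-4)(\delta-1)](\gamma^2-2\gamma+1)\}$, $w_3=\frac{\gamma\lambda}{x_2}[\gamma+\lambda-1+\delta\lambda^2-2\lambda\delta+\delta+\lambda\delta\gamma-\delta\gamma]$, $w_4=\frac{\lambda}{x_3}[1+\lambda\gamma-\gamma+\lambda\delta-\delta+\delta\gamma\lambda^2-2\lambda\delta\gamma+\delta\gamma]$, $w_i=\frac1{x_{i-1}}[\gamma^2-2\gamma+\lambda^2\gamma+1+\lambda\delta-\delta\gamma\lambda^2-2\lambda\delta\gamma+\lambda\gamma^2\delta+\lambda^3\delta\gamma-\delta+2\delta\gamma-\delta\gamma^2]$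 ($i\ge5$). Moreover there are real $c_{31},c_{32},c_{33},c_{34}$ with $\mathbf{w}^{EM}=c_{31}\mathbf{u}=c_{32}\mathbf{v}=c_{33}\mathbf{z}=c_{34}\mathbf{y}$, where $u_1=x_1[\lambda^3\delta\gamma-(n-2)\delta\gamma\lambda^2-(n-4)\delta(\gamma-1)^2+\lambda+(n-2)\lambda^2\gamma-2\lambda\gamma+\lambda\gamma^2+(n-4)(\gamma-1)^2]$, $u_2=\lambda(\lambda^3\gamma-(n-1)\lambda^2\gamma-(n-3)(\gamma-1)^2)$, $u_3=\frac{x_1}{x_2}\gamma\lambda(\lambda\gamma+\lambda^2-2\lambda-\gamma+1+\delta\lambda-\delta+\delta\gamma)$, $u_4=\frac{x_1}{x_3}\lambda(\lambda+\lambda^2\gamma-2\lambda\gamma-1+\gamma+\delta+\lambda\delta\gamma-\delta\gamma)$, $u_i=\frac{x_1}{x_{i-1}}(\lambda\gamma^2-2\lambda\gamma+\lambda^3\gamma+\lambda-\gamma^2+2\gamma-\lambda^2\gamma-1+\delta-2\delta\gamma+\delta\gamma^2+\delta\gamma\lambda^2)$ ($i\ge5$); $v_1=x_2\delta\lambda(1+\lambda\gamma-\gamma)(\delta+\lambda-1)$, $v_2=\frac{x_2}{x_1}\lambda(1+\lambda\gamma-\gamma)(1+\delta\lambda-\delta)$, $v_3=\gamma\lambda[\lambda^3\delta-(n-1)\delta\lambda^2-(n-3)(\delta-1)^2]$, $v_4=\frac{x_2}{x_3}[\delta\lambda^3-(n-2)\delta\lambda^2(1-\gamma)-2\lambda\delta\gamma+2(n-4)\delta(1-\gamma)+\lambda\gamma+\delta^2\lambda\gamma+(n-4)(-1+\gamma-\delta^2+\delta^2\gamma)]$,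 $v_i=\frac{x_2}{x_{i-1}}(1+\lambda\gamma-\gamma)(\delta\lambda^2+1-2\delta+\delta^2)$ ($i\ge5$); $z_1=x_3\delta\lambda(\lambda\gamma+\lambda^2-2\lambda-\gamma+1+\delta\lambda-\delta+\delta\gamma)$, $z_2=\frac{x_3}{x_1}\lambda(\gamma+\lambda-1)(1+\delta\lambda-\delta)$, $z_3=\frac{x_3}{x_2}[\lambda^3\delta\gamma-(n-2)\delta\lambda^2(\gamma-1)-2\delta\lambda+2(n-4)\delta(\gamma-1)+\lambda+\delta^2\lambda+(n-4)(1-\gamma+\delta^2-\delta^2\gamma)]$, $z_4=\lambda[\delta\lambda^3-(n-1)\delta\lambda^2-(n-3)(\delta-1)^2]$, $z_i=\frac{x_3}{x_{i-1}}(\delta\gamma\lambda^2+\lambda^3\delta-\delta\lambda^2-2\delta\lambda-2\delta\gamma+2\delta-1+\gamma+\lambda+\delta^2\lambda-\delta^2+\delta^2\gamma)$ ($i\ge5$); $y_1=x_4\delta\lambda(\gamma^2-2\gamma+\lambda^2\gamma+1)(\delta+\lambda-1)$, $y_2=\frac{x_4}{x_1}\lambda(\gamma^2-2\gamma+\lambda^2\gamma+1)(1+\delta\lambda-\delta)$, $y_3=\frac{x_4}{x_2}\gamma\lambda(\delta\gamma\lambda^2+\lambda^3\delta-\delta\lambda^2-2\delta\lambda-2\delta\gamma+2\delta-1+\gamma+\lambda+\delta^2\lambda-\delta^2+\delta^2\gamma)$, $y_4=\frac{x_4}{x_3}\lambda(\delta\lambda^2+\lambda^3\delta\gamma-\delta\gamma\lambda^2-2\lambda\delta\gamma-2\delta+2\delta\gamma-\gamma+1+\lambda\gamma+\delta^2+\delta^2\lambda\gamma-\delta^2\gamma)$,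 $y_i=\frac{x_4}{x_{i-1}}(\gamma^2-2\gamma+\lambda^2\gamma+1)(\delta\lambda^2+1-2\delta+\delta^2)$ ($i\ge5$).
   Context: The principal right eigenvector of a positive matrix is its Perron eigenvector (positive eigenvector for the largest eigenvalue $\lambda_{\max}$), determined up to a positive scalar multiple. *)

theory Defs
  imports Complex_Main
begin

text \<open>Matrices of size n are represented as functions nat => nat => real, indices 1..n;
vectors as functions nat => real, indices 1..n.\<close>

definition is_eigenvalue :: "nat \<Rightarrow> (nat \<Rightarrow> nat \<Rightarrow> real) \<Rightarrow> complex \<Rightarrow> bool" where
  "is_eigenvalue n A \<mu> \<longleftrightarrow>
     (\<exists>v::nat \<Rightarrow> complex. (\<exists>i\<in>{1..n}. v i \<noteq> 0) \<and>
        (\<forall>i\<in>{1..n}. (\<Sum>j=1..n. complex_of_real (A i j) * v j) = \<mu> * v i))"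

definition perron_eigenvalue :: "nat \<Rightarrow> (nat \<Rightarrow> nat \<Rightarrow> real) \<Rightarrow> real \<Rightarrow> bool" where
  "perron_eigenvalue n A l \<longleftrightarrow>
     is_eigenvalue n A (complex_of_real l) \<and> (\<forall>\<mu>. is_eigenvalue n A \<mu> \<longrightarrow> cmod \<mu> \<le> l)"

definition principal_right_eigenvector :: "nat \<Rightarrow> (nat \<Rightarrow> nat \<Rightarrow> real) \<Rightarrow> (nat \<Rightarrow> real) \<Rightarrow> bool" where
  "principal_right_eigenvector n A w \<longleftrightarrow>
     (\<forall>i\<in>{1..n}. w i > 0) \<and>
     (\<exists>l. perron_eigenvalue n A l \<and> (\<forall>i\<in>{1..n}. (\<Sum>j=1..n. A i j * w j) = l * w i))"

definition P_mat :: "(nat \<Rightarrow> real) \<Rightarrow> real \<Rightarrow> real \<Rightarrow> nat \<Rightarrow> nat \<Rightarrow> real" where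
  "P_mat x g d i j =
     (if i = 1 \<and> j = 2 then d * x 1
      else if i = 2 \<and> j = 1 then 1 / (d * x 1)
      else if i = 1 \<and> j = 3 then g * x 2
      else if i = 3 \<and> j = 1 then 1 / (g * x 2)
      else x (j - 1) / x (i - 1))"

text \<open>Matrix used for both Q (n = 4) and R (n >= 5).\<close>
definition Q_mat :: "(nat \<Rightarrow> real) \<Rightarrow> real \<Rightarrow> real \<Rightarrow> nat \<Rightarrow> nat \<Rightarrow> real" where
  "Q_mat x g d i j =
     (if i = 1 \<and> j = 2 then d * x 1
      else if i = 2 \<and> j = 1 then 1 / (d * x 1)
      else if i = 3 \<and> j = 4 then g * x 3 / x 2
      else if i = 4 \<and> j = 3 then x 2 / (g * x 3)
      else x (j - 1) / x (i - 1))"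

definition c1_w :: "nat \<Rightarrow> (nat \<Rightarrow> real) \<Rightarrow> real \<Rightarrow> real \<Rightarrow> real \<Rightarrow> nat \<Rightarrow> real" where
  "c1_w n x g d l i =
     (if i = 1 then d*g*l*(l - real n + 1)
      else if i = 2 then (1 / x 1) * (g*l - (real n - 2)*g + d + (real n - 3)*d*g)
      else if i = 3 then (1 / x 2) * (d*l - (real n - 2)*d + g + (real n - 3)*d*g)
      else (1 / x (i - 1)) * (g + d + d*g*l - 2*d*g))"

definition c1_u :: "nat \<Rightarrow> (nat \<Rightarrow> real) \<Rightarrow> real \<Rightarrow> real \<Rightarrow> real \<Rightarrow> nat \<Rightarrow> real" where
  "c1_u n x g d l i =
     (if i = 1 then x 1 * g * l * (d*l - (real n - 2)*d + g + real n - 3)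
      else if i = 2 then g*l^3 - (real n - 1)*g*l^2 - (real n - 3)*(g^2 - 2*g + 1)
      else if i = 3 then (x 1 / x 2) * (g*l^2 - g*l + d*l + (real n - 3)*(d*g - d - g + 1))
      else (x 1 / x (i - 1)) * (g*l^2 - g*l - g + d + d*g*l - d*g + g^2))"

definition c1_v :: "nat \<Rightarrow> (nat \<Rightarrow> real) \<Rightarrow> real \<Rightarrow> real \<Rightarrow> real \<Rightarrow> nat \<Rightarrow> real" where
  "c1_v n x g d l i =
     (if i = 1 then x 2 * d * l * (d + g*l - (real n - 2)*g + real n - 3)
      else if i = 2 then (x 2 / x 1) * (d*l^2 - d*l + g*l + (real n - 3)*(d*g - d - g + 1))
      else if i = 3 then d*l^3 - (real n - 1)*d*l^2 - (real n - 3)*(d^2 - 2*d + 1)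
      else (x 2 / x (i - 1)) * (d*l^2 - d*l + g - d + d^2 + d*g*l - d*g))"

definition c1_z :: "nat \<Rightarrow> (nat \<Rightarrow> real) \<Rightarrow> real \<Rightarrow> real \<Rightarrow> real \<Rightarrow> nat \<Rightarrow> real" where
  "c1_z n x g d l i =
     (if i = 1 then x 3 * d * g * l * (d + g + l - 2)
      else if i = 2 then (x 3 / x 1) * (d*g*l^2 - d*g*l + g^2 + g*l - g - d*g + d)
      else if i = 3 then (x 3 / x 2) * (d*g*l^2 - d*g*l - d*g + g + d^2 + d*l - d)
      else (x 3 / x (i - 1)) * (d*g*l^2 - 4*d*g + g + d + d^2*g + g^2*d))"

definition c2a_w :: "(nat \<Rightarrow> real) \<Rightarrow> real \<Rightarrow> real \<Rightarrow> real \<Rightarrow> nat \<Rightarrow> real" where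
  "c2a_w x g d l i =
     (if i = 1 then d * (l^3*g - 3*l^2*g - 1 + 2*g - g^2)
      else if i = 2 then (1 / x 1) * (l^2*g - 2*l*g + d + 2*l*d*g - 2*d*g + d*g^2)
      else if i = 3 then (g / x 2) * (g + l - 1 + d*l^2 - 2*l*d + d + l*d*g - d*g)
      else (1 / x 3) * (1 + l*g - g + l*d - d + d*g*l^2 - 2*l*d*g + d*g))"

definition c2a_u :: "(nat \<Rightarrow> real) \<Rightarrow> real \<Rightarrow> real \<Rightarrow> real \<Rightarrow> nat \<Rightarrow> real" where
  "c2a_u x g d l i =
     (if i = 1 then x 1 * (d*g*l^2 - 2*l*d*g + 1 + 2*l*g - 2*g + g^2)
      else if i = 2 then l^3*g - 3*l^2*g - 1 + 2*g - g^2
      else if i = 3 then (x 1 / x 2) * g * (l*g + l^2 - 2*l - g + 1 + l*d - d + d*g)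
      else (x 1 / x 3) * (l + l^2*g - 2*l*g - 1 + g + d + l*d*g - d*g))"

definition c2a_v :: "(nat \<Rightarrow> real) \<Rightarrow> real \<Rightarrow> real \<Rightarrow> real \<Rightarrow> nat \<Rightarrow> real" where
  "c2a_v x g d l i =
     (if i = 1 then x 2 * d * (1 + l*g - g) * (d + l - 1)
      else if i = 2 then (x 2 / x 1) * (1 + l*g - g + l*d - d + d*g*l^2 - 2*l*d*g + d*g)
      else if i = 3 then g * (d*l^3 - 3*d*l^2 - 1 + 2*d - d^2)
      else (x 2 / x 3) * (2*l*d*g + d*l^2 - 2*l*d - 2*d*g + g + d^2*g))"

definition c2a_z :: "(nat \<Rightarrow> real) \<Rightarrow> real \<Rightarrow> real \<Rightarrow> real \<Rightarrow> nat \<Rightarrow> real" where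
  "c2a_z x g d l i =
     (if i = 1 then x 3 * d * (l*g + l^2 - 2*l - g + 1 + l*d - d + d*g)
      else if i = 2 then (x 3 / x 1) * (g + l - 1 + d*l^2 - 2*l*d + d + l*d*g - d*g)
      else if i = 3 then (x 3 / x 2) * (2*l*d + d*g*l^2 - 2*l*d*g - 2*d + 1 + d^2)
      else d*l^3 - 3*d*l^2 - 1 + 2*d - d^2)"

definition c2b_w :: "nat \<Rightarrow> (nat \<Rightarrow> real) \<Rightarrow> real \<Rightarrow> real \<Rightarrow> real \<Rightarrow> nat \<Rightarrow> real" where
  "c2b_w n x g d l i =
     (if i = 1 then d*l*(l^3*g - (real n - 1)*l^2*g - (real n - 3)*(g^2 - 2*g + 1))
      else if i = 2 then (1 / x 1) * (l^3*g - (real n - 2)*l^2*g + (real n - 2)*d*g*l^2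
                                      + (l*d + (real n - 4)*(d - 1))*(g^2 - 2*g + 1))
      else if i = 3 then (g*l / x 2) * (g + l - 1 + d*l^2 - 2*l*d + d + l*d*g - d*g)
      else if i = 4 then (l / x 3) * (1 + l*g - g + l*d - d + d*g*l^2 - 2*l*d*g + d*g)
      else (1 / x (i - 1)) * (g^2 - 2*g + l^2*g + 1 + l*d - d*g*l^2 - 2*l*d*g + l*g^2*d
                              + l^3*d*g - d + 2*d*g - d*g^2))"

definition c2b_u :: "nat \<Rightarrow> (nat \<Rightarrow> real) \<Rightarrow> real \<Rightarrow> real \<Rightarrow> real \<Rightarrow> nat \<Rightarrow> real" where
  "c2b_u n x g d l i =
     (if i = 1 then x 1 * (l^3*d*g - (real n - 2)*d*g*l^2 - (real n - 4)*d*(g - 1)^2 + l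
                           + (real n - 2)*l^2*g - 2*l*g + l*g^2 + (real n - 4)*(g - 1)^2)
      else if i = 2 then l * (l^3*g - (real n - 1)*l^2*g - (real n - 3)*(g - 1)^2)
      else if i = 3 then (x 1 / x 2) * g * l * (l*g + l^2 - 2*l - g + 1 + d*l - d + d*g)
      else if i = 4 then (x 1 / x 3) * l * (l + l^2*g - 2*l*g - 1 + g + d + l*d*g - d*g)
      else (x 1 / x (i - 1)) * (l*g^2 - 2*l*g + l^3*g + l - g^2 + 2*g - l^2*g - 1 + d
                                - 2*d*g + d*g^2 + d*g*l^2))"

definition c2b_v :: "nat \<Rightarrow> (nat \<Rightarrow> real) \<Rightarrow> real \<Rightarrow> real \<Rightarrow> real \<Rightarrow> nat \<Rightarrow> real" where
  "c2b_v n x g d l i =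
     (if i = 1 then x 2 * d * l * (1 + l*g - g) * (d + l - 1)
      else if i = 2 then (x 2 / x 1) * l * (1 + l*g - g) * (1 + d*l - d)
      else if i = 3 then g * l * (l^3*d - (real n - 1)*d*l^2 - (real n - 3)*(d - 1)^2)
      else if i = 4 then (x 2 / x 3) * (d*l^3 - (real n - 2)*d*l^2*(1 - g) - 2*l*d*g
                                        + 2*(real n - 4)*d*(1 - g) + l*g + d^2*l*g
                                        + (real n - 4)*(-1 + g - d^2 + d^2*g))
      else (x 2 / x (i - 1)) * (1 + l*g - g) * (d*l^2 + 1 - 2*d + d^2))"

definition c2b_z :: "nat \<Rightarrow> (nat \<Rightarrow> real) \<Rightarrow> real \<Rightarrow> real \<Rightarrow> real \<Rightarrow> nat \<Rightarrow> real" where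
  "c2b_z n x g d l i =
     (if i = 1 then x 3 * d * l * (l*g + l^2 - 2*l - g + 1 + d*l - d + d*g)
      else if i = 2 then (x 3 / x 1) * l * (g + l - 1) * (1 + d*l - d)
      else if i = 3 then (x 3 / x 2) * (l^3*d*g - (real n - 2)*d*l^2*(g - 1) - 2*d*l
                                        + 2*(real n - 4)*d*(g - 1) + l + d^2*l
                                        + (real n - 4)*(1 - g + d^2 - d^2*g))
      else if i = 4 then l * (d*l^3 - (real n - 1)*d*l^2 - (real n - 3)*(d - 1)^2)
      else (x 3 / x (i - 1)) * (d*g*l^2 + l^3*d - d*l^2 - 2*d*l - 2*d*g + 2*d - 1 + g + l
                                + d^2*l - d^2 + d^2*g))"

definition c2b_y :: "nat \<Rightarrow> (nat \<Rightarrow> real) \<Rightarrow> real \<Rightarrow> real \<Rightarrow> real \<Rightarrow> nat \<Rightarrow> real" where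
  "c2b_y n x g d l i =
     (if i = 1 then x 4 * d * l * (g^2 - 2*g + l^2*g + 1) * (d + l - 1)
      else if i = 2 then (x 4 / x 1) * l * (g^2 - 2*g + l^2*g + 1) * (1 + d*l - d)
      else if i = 3 then (x 4 / x 2) * g * l * (d*g*l^2 + l^3*d - d*l^2 - 2*d*l - 2*d*g + 2*d
                                                - 1 + g + l + d^2*l - d^2 + d^2*g)
      else if i = 4 then (x 4 / x 3) * l * (d*l^2 + l^3*d*g - d*g*l^2 - 2*l*d*g - 2*d + 2*d*g
                                            - g + 1 + l*g + d^2 + d^2*l*g - d^2*g)
      else (x 4 / x (i - 1)) * (g^2 - 2*g + l^2*g + 1) * (d*l^2 + 1 - 2*d + d^2))"

end

theory Submission
  imports Defs
begin

definition redrow :: "nat \<Rightarrow> nat \<Rightarrow> (nat\<Rightarrow>nat\<Rightarrow>real) \<Rightarrow> (nat \<Rightarrow> real) \<Rightarrow> nat \<Rightarrow> real" where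
 "redrow n K B W k = (\<Sum>k'=1..K-1. B k k' * W k') + real (n-K+1) * B k K * W K"

lemma sum_split_min:
  fixes F :: "nat \<Rightarrow> real"
  assumes "1 \<le> K" "K \<le> n"
  shows "(\<Sum>j=1..n. F (min j K)) = (\<Sum>j=1..K-1. F j) + real (n-K+1) * F K"
proof -
  have U: "{1..n} = {1..K-1} \<union> {K..n}" using assms by auto
  have D: "{1..K-1} \<inter> {K..n} = {}" by auto
  have "(\<Sum>j=1..n. F (min j K)) = (\<Sum>j=1..K-1. F (min j K)) + (\<Sum>j=K..n. F (min j K))"
    unfolding U by (rule sum.union_disjoint) (use D in auto)
  also have "(\<Sum>j=1..K-1. F (min j K)) = (\<Sum>j=1..K-1. F j)"
    by (rule sum.cong) auto
  also have "(\<Sum>j=K..n. F (min j K)) = (\<Sum>j=K..n. F K)"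
    by (rule sum.cong) auto
  also have "\<dots> = real (n-K+1) * F K" using assms by simp
  finally show ?thesis .
qed

lemma lift:
  assumes Afac: "\<forall>i\<in>{1..n}. \<forall>j\<in>{1..n}. A i j = x(j-1)/x(i-1) * B (min i K) (min j K)"
    and xnz: "\<forall>j\<in>{1..n}. x(j-1) \<noteq> 0" and K: "1\<le>K" "K\<le>n"
    and red: "\<forall>k\<in>{1..K}. redrow n K B W k = l * W k"
  shows "\<forall>i\<in>{1..n}. (\<Sum>j=1..n. A i j * (W(min j K)/x(j-1))) = l * (W(min i K)/x(i-1))"
proof
  fix i assume i: "i \<in> {1..n}"
  have "(\<Sum>j=1..n. A i j * (W(min j K)/x(j-1))) = (\<Sum>j=1..n. (1/x(i-1)) * (B (min i K) (min j K) * W(min j K)))"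
    by (rule sum.cong) (use Afac xnz i in auto)
  also have "\<dots> = (1/x(i-1)) * (\<Sum>j=1..n. (\<lambda>k. B (min i K) k * W k) (min j K))"
    by (simp add: sum_distrib_left)
  also have "\<dots> = (1/x(i-1)) * redrow n K B W (min i K)"
    using sum_split_min[OF K, of "\<lambda>k. B (min i K) k * W k"] by (simp add: redrow_def mult.assoc)
  also have "\<dots> = l * (W(min i K)/x(i-1))"
    using red i K by auto
  finally show "(\<Sum>j=1..n. A i j * (W(min j K)/x(j-1))) = l * (W(min i K)/x(i-1))" .
qed

lemma reduce:
  assumes Afac: "\<forall>i\<in>{1..n}. \<forall>j\<in>{1..n}. A i j = x(j-1)/x(i-1) * B (min i K) (min j K)"
    and xnz: "\<forall>j\<in>{1..n}. x(j-1) \<noteq> 0" and K: "1\<le>K" "K\<le>n"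
    and eig: "\<forall>i\<in>{1..n}. (\<Sum>j=1..n. A i j * u j) = l * u i" and l: "l \<noteq> 0"
    and nz: "\<exists>i\<in>{1..n}. u i \<noteq> 0"
  shows "\<exists>V. (\<forall>k\<in>{1..K}. redrow n K B V k = l * V k) \<and> (\<exists>k\<in>{1..K}. V k \<noteq> 0)"
proof -
  define V where "V j = x(j-1) * u j" for j
  have e1: "(\<Sum>j=1..n. B (min i K) (min j K) * V j) = l * V i" if i: "i\<in>{1..n}" for i
  proof -
    have "(\<Sum>j=1..n. A i j * u j) = (\<Sum>j=1..n. (1/x(i-1)) * (B (min i K) (min j K) * V j))"
      by (rule sum.cong) (use Afac xnz i in \<open>auto simp: V_def\<close>)
    also have "\<dots> = (1/x(i-1)) * (\<Sum>j=1..n. B (min i K) (min j K) * V j)"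
      by (simp add: sum_distrib_left)
    finally have "(1/x(i-1)) * (\<Sum>j=1..n. B (min i K) (min j K) * V j) = l * u i"
      using eig i by simp
    then show ?thesis using xnz i by (auto simp: V_def field_simps)
  qed
  have eqK: "V i = V K" if i: "i\<in>{K..n}" for i
  proof -
    have "l * V i = l * V K"
      using e1[of i] e1[of K] i K by auto
    then show ?thesis using l by simp
  qed
  have Vmin: "V j = V (min j K)" if "j \<in> {1..n}" for j
  proof (cases "j \<le> K")
    case True then show ?thesis by simp
  next
    case False then show ?thesis using eqK[of j] that by simp
  qed
  have red: "redrow n K B V k = l * V k" if k: "k \<in> {1..K}" for k
  proof -
    have "(\<Sum>j=1..n. B (min k K) (min j K) * V j) = (\<Sum>j=1..n. (\<lambda>m. B (min k K) m * V m) (min j K))"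
      by (intro sum.cong refl) (metis Vmin)
    also have "\<dots> = redrow n K B V (min k K)"
      using sum_split_min[OF K, of "\<lambda>m. B (min k K) m * V m"] by (simp add: redrow_def mult.assoc)
    finally show ?thesis using e1[of k] k K by auto
  qed
  obtain i where i: "i \<in> {1..n}" "u i \<noteq> 0" using nz by auto
  have "V i \<noteq> 0" using i xnz by (simp add: V_def)
  then have "V (min i K) \<noteq> 0" using Vmin[OF i(1)] by simp
  moreover have "min i K \<in> {1..K}" using i K by auto
  ultimately show ?thesis using red by blast
qed

lemma real_eig:
  assumes "is_eigenvalue n A (complex_of_real l)"
  shows "\<exists>u. (\<exists>i\<in>{1..n}. u i \<noteq> 0) \<and> (\<forall>i\<in>{1..n}. (\<Sum>j=1..n. A i j * u j) = l * u i)"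
proof -
  obtain v where nz: "\<exists>i\<in>{1..n}. v i \<noteq> 0"
    and ev: "\<forall>i\<in>{1..n}. (\<Sum>j=1..n. complex_of_real (A i j) * v j) = complex_of_real l * v i"
    using assms unfolding is_eigenvalue_def by blast
  have re: "(\<Sum>j=1..n. A i j * Re (v j)) = l * Re (v i)" if "i\<in>{1..n}" for i
    using arg_cong[OF ev[rule_format, OF that], of Re] by (simp add: Re_sum)
  have im: "(\<Sum>j=1..n. A i j * Im (v j)) = l * Im (v i)" if "i\<in>{1..n}" for i
    using arg_cong[OF ev[rule_format, OF that], of Im] by (simp add: Im_sum)
  obtain i where i: "i\<in>{1..n}" "v i \<noteq> 0" using nz by auto
  show ?thesis
  proof (cases "Re (v i) = 0")
    case True
    then have "Im (v i) \<noteq> 0" using i complex_eqI[of "v i" 0] by auto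
    then show ?thesis using im i by (intro exI[of _ "\<lambda>j. Im (v j)"]) auto
  next
    case False
    then show ?thesis using re i by (intro exI[of _ "\<lambda>j. Re (v j)"]) auto
  qed
qed

lemma to_eig:
  assumes "i0 \<in> {1..n}" "u i0 \<noteq> 0" "\<forall>i\<in>{1..n}. (\<Sum>j=1..n. A i j * u j) = l * u i"
  shows "is_eigenvalue n A (complex_of_real l)"
  unfolding is_eigenvalue_def
proof (intro exI conjI)
  show "\<exists>i\<in>{1..n}. complex_of_real (u i) \<noteq> 0" using assms by auto
  show "\<forall>i\<in>{1..n}. (\<Sum>j=1..n. complex_of_real (A i j) * complex_of_real (u j)) = complex_of_real l * complex_of_real (u i)"
  proof
    fix i assume "i\<in>{1..n}"
    then have "complex_of_real (\<Sum>j=1..n. A i j * u j) = complex_of_real (l * u i)" using assms by simp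
    then show "(\<Sum>j=1..n. complex_of_real (A i j) * complex_of_real (u j)) = complex_of_real l * complex_of_real (u i)"
      by (simp add: of_real_sum)
  qed
qed

lemma prop_lemma:
  fixes n K k0 :: nat and x w u Wr Ur :: "nat \<Rightarrow> real"
  assumes "\<forall>i\<in>{1..n}. w i = Wr (min i K)/x(i-1)" "\<forall>i\<in>{1..n}. u i = s * Ur (min i K)/x(i-1)"
    "s \<noteq> 0" "Ur k0 \<noteq> 0" "\<forall>k\<in>{1..K}. Wr k * Ur k0 = Wr k0 * Ur k" "K \<ge> 1"
  shows "\<exists>c. \<forall>i\<in>{1..n}. w i = c * u i"
proof (intro exI ballI)
  fix i assume i: "i \<in> {1..n}"
  have k: "min i K \<in> {1..K}" using i \<open>K \<ge> 1\<close> by simp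
  define m where "m = min i K"
  have e: "Wr m * Ur k0 = Wr k0 * Ur m" using assms(5) k by (simp add: m_def)
  have w: "w i = Wr m / x(i-1)" using assms(1) i by (simp add: m_def)
  have u: "u i = s * Ur m / x(i-1)" using assms(2) i by (simp add: m_def)
  have "Wr m = Wr k0 * Ur m / Ur k0" using e assms(4) by (simp add: field_simps)
  then show "w i = Wr k0 / (s * Ur k0) * u i"
    using w u assms(3,4) by simp
qed

lemma pos_lemma:
  fixes w z :: "nat \<Rightarrow> real"
  assumes "\<forall>i\<in>S. w i = c * z i" "\<forall>i\<in>S. z i > 0" "i0 \<in> S" "w i0 > 0"
  shows "\<forall>i\<in>S. w i > 0"
proof -
  have "c > 0" using assms by (metis zero_less_mult_pos2)
  then show ?thesis using assms by auto
qed

lemma perron_ge: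
  assumes "perron_eigenvalue n A l" "is_eigenvalue n A (complex_of_real r)"
  shows "r \<le> l"
  using assms unfolding perron_eigenvalue_def by force

lemma poly_root:
  fixes p :: "real \<Rightarrow> real"
  assumes pe: "\<forall>t. p t = a * t^k * (t - N) + b*t^2 + b1*t + c" and a: "a > 0" and k: "k \<ge> 2"
    and t0: "t0 \<ge> 1" "p t0 < 0"
  shows "\<exists>r\<ge>t0. p r = 0"
proof -
  define S where "S = \<bar>b\<bar> + \<bar>b1\<bar> + \<bar>c\<bar>"
  define T where "T = max t0 N + 1 + S/a"
  have S0: "S \<ge> 0" by (simp add: S_def)
  have Sa: "S/a \<ge> 0" using S0 a by simp
  have T1: "T \<ge> 1" "T \<ge> t0" "T - N \<ge> 1 + S/a" using t0 Sa unfolding T_def by (auto simp: max_def)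
  have "T^2 \<le> T^k" using T1 k by (simp add: power_increasing)
  have TT: "T \<le> T^2" using T1 by (simp add: power2_eq_square)
  have "\<bar>b*T^2 + b1*T + c\<bar> \<le> \<bar>b\<bar>*T^2 + \<bar>b1\<bar>*T + \<bar>c\<bar>"
    using T1 by (simp add: abs_mult abs_triangle_ineq4 order_trans[OF abs_triangle_ineq] add_mono)
  also have "\<dots> \<le> S * T^2"
  proof -
    have "\<bar>b1\<bar>*T \<le> \<bar>b1\<bar>*T^2" using TT by (simp add: mult_left_mono)
    moreover have "\<bar>c\<bar> \<le> \<bar>c\<bar>*T^2" using T1
      by (metis abs_ge_zero mult.right_neutral mult_left_mono one_le_power)
    ultimately show ?thesis by (simp add: S_def algebra_simps)
  qed
  finally have L: "b*T^2 + b1*T + c \<ge> - (S * T^2)" by linarith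
  have "a * T^k * (T - N) \<ge> a * T^2 * (1 + S/a)"
    using T1 \<open>T^2 \<le> T^k\<close> a Sa by (intro mult_mono) auto
  also have "a * T^2 * (1 + S/a) = a*T^2 + S*T^2" using a by (simp add: field_simps)
  finally have M: "a * T^k * (T - N) \<ge> a*T^2 + S*T^2" .
  have "a*T^2 > 0" using a T1 by simp
  then have "p T > 0" using pe[rule_format, of T] L M by linarith
  have cont: "continuous_on {t0..T} p"
  proof -
    have "p = (\<lambda>t. a * t^k * (t - N) + b*t^2 + b1*t + c)" using pe by auto
    then show ?thesis by (simp; intro continuous_intros)
  qed
  have "\<exists>x\<ge>t0. x \<le> T \<and> p x = 0"
    by (rule IVT') (use t0 \<open>p T > 0\<close> T1 cont in auto)
  then show ?thesis by blast
qed

lemma redrow4: "n \<ge> 4 \<Longrightarrow> redrow n 4 B W k = B k 1 * W 1 + B k 2 * W 2 + B k 3 * W 3 + (real n - 3) * B k 4 * W 4"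
  by (simp add: redrow_def numeral_3_eq_3 numeral_2_eq_2 of_nat_diff)

lemma four_cases: "k \<in> {1..(4::nat)} \<longleftrightarrow> k = 1 \<or> k = 2 \<or> k = 3 \<or> k = 4" by auto

definition B1 :: "real \<Rightarrow> real \<Rightarrow> nat \<Rightarrow> nat \<Rightarrow> real" where
  "B1 g d k m = (if k=1 \<and> m=2 then d else if k=2 \<and> m=1 then 1/d else if k=1 \<and> m=3 then g
     else if k=3 \<and> m=1 then 1/g else 1)"

definition h1 :: "real \<Rightarrow> real \<Rightarrow> real \<Rightarrow> real \<Rightarrow> real" where
  "h1 N g d l = l^3*d*g - l^2*d*g*N - d^2*g*N + 3*d^2*g - d^2 - d*g^2*N + 3*d*g^2 + 4*d*g*N - 10*d*g - d*N + 3*d - g^2 - g*N + 3*g"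

definition W1r :: "real \<Rightarrow> real \<Rightarrow> real \<Rightarrow> real \<Rightarrow> nat \<Rightarrow> real" where
  "W1r N g d l i =
     (if i = 1 then d*g*l*(l - N + 1)
      else if i = 2 then (g*l - (N - 2)*g + d + (N - 3)*d*g)
      else if i = 3 then (d*l - (N - 2)*d + g + (N - 3)*d*g)
      else (g + d + d*g*l - 2*d*g))"

definition U1r :: "real \<Rightarrow> real \<Rightarrow> real \<Rightarrow> real \<Rightarrow> nat \<Rightarrow> real" where
  "U1r N g d l i =
     (if i = 1 then g * l * (d*l - (N - 2)*d + g + N - 3)
      else if i = 2 then g*l^3 - (N - 1)*g*l^2 - (N - 3)*(g^2 - 2*g + 1)
      else if i = 3 then (g*l^2 - g*l + d*l + (N - 3)*(d*g - d - g + 1))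
      else (g*l^2 - g*l - g + d + d*g*l - d*g + g^2))"

definition V1r :: "real \<Rightarrow> real \<Rightarrow> real \<Rightarrow> real \<Rightarrow> nat \<Rightarrow> real" where
  "V1r N g d l i =
     (if i = 1 then d * l * (d + g*l - (N - 2)*g + N - 3)
      else if i = 2 then (d*l^2 - d*l + g*l + (N - 3)*(d*g - d - g + 1))
      else if i = 3 then d*l^3 - (N - 1)*d*l^2 - (N - 3)*(d^2 - 2*d + 1)
      else (d*l^2 - d*l + g - d + d^2 + d*g*l - d*g))"

definition Z1r :: "real \<Rightarrow> real \<Rightarrow> real \<Rightarrow> real \<Rightarrow> nat \<Rightarrow> real" where
  "Z1r N g d l i =
     (if i = 1 then d * g * l * (d + g + l - 2)
      else if i = 2 then (d*g*l^2 - d*g*l + g^2 + g*l - g - d*g + d)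
      else if i = 3 then (d*g*l^2 - d*g*l - d*g + g + d^2 + d*l - d)
      else (d*g*l^2 - 4*d*g + g + d + d^2*g + g^2*d))"

lemma Pfac:
  assumes "x 0 = 1"
  shows "\<forall>i\<in>{1..n}. \<forall>j\<in>{1..n}. P_mat x g d i j = x(j-1)/x(i-1) * B1 g d (min i 4) (min j 4)"
  using assms by (auto simp: P_mat_def B1_def min_def)

lemma rows1:
  assumes "n \<ge> 4"
  shows "redrow n 4 (B1 g d) W 1 = W 1 + d*W 2 + g*W 3 + (real n-3)*W 4"
    "redrow n 4 (B1 g d) W 2 = (1/d)*W 1 + W 2 + W 3 + (real n-3)*W 4"
    "redrow n 4 (B1 g d) W 3 = (1/g)*W 1 + W 2 + W 3 + (real n-3)*W 4"
    "redrow n 4 (B1 g d) W 4 = W 1 + W 2 + W 3 + (real n-3)*W 4"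
  using assms by (simp_all add: redrow4 B1_def)

lemma ball4: "(\<forall>k\<in>{1..4::nat}. P k) \<longleftrightarrow> P 1 \<and> P 2 \<and> P 3 \<and> P 4"
proof
  assume "\<forall>k\<in>{1..4::nat}. P k" then show "P 1 \<and> P 2 \<and> P 3 \<and> P 4" by auto
next
  assume A: "P 1 \<and> P 2 \<and> P 3 \<and> P 4"
  show "\<forall>k\<in>{1..4::nat}. P k"
  proof
    fix k :: nat assume "k \<in> {1..4}"
    then have "k = 1 \<or> k = 2 \<or> k = 3 \<or> k = 4" by auto
    then show "P k" using A by auto
  qed
qed

lemma red1_iff:
  assumes "n \<ge> 4" "d > 0" "g > 0"
  shows "(\<forall>k\<in>{1..4}. redrow n 4 (B1 g d) W k = l * W k) \<longleftrightarrow>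
    (W 1 + d*W 2 + g*W 3 + (real n-3)*W 4 = l*W 1 \<and>
     W 1 + d*W 2 + d*W 3 + d*(real n-3)*W 4 = d*l*W 2 \<and>
     W 1 + g*W 2 + g*W 3 + g*(real n-3)*W 4 = g*l*W 3 \<and>
     W 1 + W 2 + W 3 + (real n-3)*W 4 = l*W 4)"
  unfolding ball4 rows1[OF assms(1)] using assms(2,3) by (auto simp: field_simps)

lemma char1:
  assumes n: "n \<ge> 4" and d: "d > 0" and g: "g > 0" and l: "l \<noteq> 0"
    and red: "\<forall>k\<in>{1..4}. redrow n 4 (B1 g d) V k = l * V k" and nz: "\<exists>k\<in>{1..4}. V k \<noteq> 0"
  shows "h1 (real n) g d l = 0"
proof -
  define N where "N = real n"
  have R: "V 1 + d*V 2 + g*V 3 + (N-3)*V 4 = l*V 1"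
     "V 1 + d*V 2 + d*V 3 + d*(N-3)*V 4 = d*l*V 2"
     "V 1 + g*V 2 + g*V 3 + g*(N-3)*V 4 = g*l*V 3"
     "V 1 + V 2 + V 3 + (N-3)*V 4 = l*V 4"
    using red unfolding red1_iff[OF n d g] N_def by auto
  have "l * h1 N g d l * V 1 = 0" "l * h1 N g d l * V 2 = 0" "l * h1 N g d l * V 3 = 0" "l * h1 N g d l * V 4 = 0"
    unfolding h1_def using R by algebra+
  then have "\<forall>k\<in>{1..4}. l * h1 N g d l * V k = 0" unfolding ball4 by auto
  then show ?thesis using nz l by (auto simp: N_def)
qed

lemma redW1:
  assumes n: "n \<ge> 4" and d: "d > 0" and g: "g > 0" and h: "h1 (real n) g d l = 0"
  shows "\<forall>k\<in>{1..4}. redrow n 4 (B1 g d) (W1r (real n) g d l) k = l * W1r (real n) g d l k"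
proof -
  define N where "N = real n"
  have h': "h1 N g d l = 0" using h by (simp add: N_def)
  have v: "W1r N g d l 1 = d*g*l*(l - N + 1)" "W1r N g d l 2 = (g*l - (N - 2)*g + d + (N - 3)*d*g)"
    "W1r N g d l 3 = (d*l - (N - 2)*d + g + (N - 3)*d*g)" "W1r N g d l 4 = (g + d + d*g*l - 2*d*g)"
    by (simp_all add: W1r_def)
  show ?thesis unfolding red1_iff[OF n d g] N_def[symmetric] v
    by (insert h'[unfolded h1_def], intro conjI; (algebra | simp add: algebra_simps power2_eq_square power3_eq_cube))
qed

lemma vals1:
  "W1r N g d l 1 = d*g*l*(l - N + 1)" "W1r N g d l 2 = (g*l - (N - 2)*g + d + (N - 3)*d*g)"
  "W1r N g d l 3 = (d*l - (N - 2)*d + g + (N - 3)*d*g)" "W1r N g d l 4 = (g + d + d*g*l - 2*d*g)"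
  "U1r N g d l 1 = g * l * (d*l - (N - 2)*d + g + N - 3)"
  "U1r N g d l 2 = g*l^3 - (N - 1)*g*l^2 - (N - 3)*(g^2 - 2*g + 1)"
  "U1r N g d l 3 = (g*l^2 - g*l + d*l + (N - 3)*(d*g - d - g + 1))"
  "U1r N g d l 4 = (g*l^2 - g*l - g + d + d*g*l - d*g + g^2)"
  "V1r N g d l 1 = d * l * (d + g*l - (N - 2)*g + N - 3)"
  "V1r N g d l 2 = (d*l^2 - d*l + g*l + (N - 3)*(d*g - d - g + 1))"
  "V1r N g d l 3 = d*l^3 - (N - 1)*d*l^2 - (N - 3)*(d^2 - 2*d + 1)"
  "V1r N g d l 4 = (d*l^2 - d*l + g - d + d^2 + d*g*l - d*g)"
  "Z1r N g d l 1 = d * g * l * (d + g + l - 2)"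
  "Z1r N g d l 2 = (d*g*l^2 - d*g*l + g^2 + g*l - g - d*g + d)"
  "Z1r N g d l 3 = (d*g*l^2 - d*g*l - d*g + g + d^2 + d*l - d)"
  "Z1r N g d l 4 = (d*g*l^2 - 4*d*g + g + d + d^2*g + g^2*d)"
  by (simp_all add: W1r_def U1r_def V1r_def Z1r_def)

lemma prop1:
  assumes h: "h1 N g d l = 0"
  shows "\<forall>k\<in>{1..4}. W1r N g d l k * U1r N g d l 4 = W1r N g d l 4 * U1r N g d l k"
    "\<forall>k\<in>{1..4}. W1r N g d l k * V1r N g d l 4 = W1r N g d l 4 * V1r N g d l k"
    "\<forall>k\<in>{1..4}. W1r N g d l k * Z1r N g d l 4 = W1r N g d l 4 * Z1r N g d l k"
  unfolding ball4 vals1 by (insert h[unfolded h1_def], intro conjI; (algebra | simp add: algebra_simps power2_eq_square power3_eq_cube))+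

lemma l2facts:
  fixes l :: real assumes "l \<ge> 2"
  shows "l^2 - l - 1 \<ge> 1" "l^2 - 4 \<ge> 0" "l - 1 \<ge> 1" "l - 2 \<ge> 0" "l > 0"
proof -
  have "l*l \<ge> 2*l" using assms by (intro mult_right_mono) auto
  then show "l^2 - l - 1 \<ge> 1" "l^2 - 4 \<ge> 0" using assms by (auto simp: power2_eq_square) (use \<open>l*l \<ge> 2*l\<close> assms in linarith)+
qed (use assms in auto)

lemma pos1:
  assumes l: "l \<ge> 2" and d: "d > 0" and g: "g > 0"
  shows "W1r N g d l 4 > 0" "U1r N g d l 4 > 0" "V1r N g d l 4 > 0"
    "Z1r N g d l 1 > 0" "Z1r N g d l 2 > 0" "Z1r N g d l 3 > 0" "Z1r N g d l 4 > 0"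
proof -
  note L = l2facts[OF l]
  have dg: "d*g > 0" using d g by simp
  have a1: "d*g*(l-2) \<ge> 0" using dg L by simp
  have a2: "g*(l^2-l-1) \<ge> g" using g L by (simp add: mult_left_mono[of 1 _ g, simplified])
  have a3: "d*g*(l-1) \<ge> 0" using dg L by simp
  have a4: "d*(l^2-l-1) \<ge> d" using d L by (simp add: mult_left_mono[of 1 _ d, simplified])
  have a5: "d*g*(l^2-l-1) \<ge> d*g" using dg L by (simp add: mult_left_mono[of 1 _ "d*g", simplified])
  have a6: "g*(l-1) \<ge> 0" "d*(l-1) \<ge> 0" using d g L by simp_all
  have a7: "d*g*(l^2-4) \<ge> 0" using dg L by simp
  have a8: "d*g*l*(d+g+l-2) > 0" using dg L d g by simp
  have sq: "g^2 \<ge> 0" "d^2 \<ge> 0" "d^2*g \<ge> 0" "g^2*d \<ge> 0" using d g by simp_all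
  show "W1r N g d l 4 > 0"
  proof -
    have "W1r N g d l 4 = g + d + d*g*(l-2)" by (simp add: vals1 algebra_simps)
    then show ?thesis using a1 d g by linarith
  qed
  show "U1r N g d l 4 > 0"
  proof -
    have "U1r N g d l 4 = g*(l^2-l-1) + d + d*g*(l-1) + g^2" by (simp add: vals1 algebra_simps)
    then show ?thesis using a2 a3 sq d g by linarith
  qed
  show "V1r N g d l 4 > 0"
  proof -
    have "V1r N g d l 4 = d*(l^2-l-1) + g + d^2 + d*g*(l-1)" by (simp add: vals1 algebra_simps)
    then show ?thesis using a4 a3 sq d g by linarith
  qed
  show "Z1r N g d l 1 > 0" using a8 by (simp add: Z1r_def)
  show "Z1r N g d l 2 > 0"
  proof -
    have "Z1r N g d l 2 = d*g*(l^2-l-1) + g^2 + g*(l-1) + d" by (simp add: vals1 algebra_simps)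
    then show ?thesis using a5 a6 sq d g dg by linarith
  qed
  show "Z1r N g d l 3 > 0"
  proof -
    have "Z1r N g d l 3 = d*g*(l^2-l-1) + g + d^2 + d*(l-1)" by (simp add: vals1 algebra_simps)
    then show ?thesis using a5 a6 sq d g dg by linarith
  qed
  show "Z1r N g d l 4 > 0"
  proof -
    have "Z1r N g d l 4 = d*g*(l^2-4) + g + d + d^2*g + g^2*d" by (simp add: vals1 algebra_simps)
    then show ?thesis using a7 sq d g by linarith
  qed
qed

lemma rep1:
  assumes x0: "x 0 = 1" and xp: "\<forall>j\<in>{1..n}. x(j-1) > 0" and n: "n \<ge> 4" and i: "i \<in> {1..n}"
  shows "c1_w n x g d l i = W1r (real n) g d l (min i 4) / x(i-1)"
    "c1_u n x g d l i = x 1 * U1r (real n) g d l (min i 4) / x(i-1)"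
    "c1_v n x g d l i = x 2 * V1r (real n) g d l (min i 4) / x(i-1)"
    "c1_z n x g d l i = x 3 * Z1r (real n) g d l (min i 4) / x(i-1)"
proof -
  have x1: "x 1 > 0" using xp[rule_format, of 2] n by auto
  have x2: "x 2 > 0" using xp[rule_format, of 3] n by auto
  have x3: "x 3 > 0" using xp[rule_format, of 4] n by auto
  have "i = 1 \<or> i = 2 \<or> i = 3 \<or> i \<ge> 4" using i by auto
  then show "c1_w n x g d l i = W1r (real n) g d l (min i 4) / x(i-1)"
    "c1_u n x g d l i = x 1 * U1r (real n) g d l (min i 4) / x(i-1)"
    "c1_v n x g d l i = x 2 * V1r (real n) g d l (min i 4) / x(i-1)"
    "c1_z n x g d l i = x 3 * Z1r (real n) g d l (min i 4) / x(i-1)"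
    using x0 x1 x2 x3
    by (auto simp: c1_w_def c1_u_def c1_v_def c1_z_def W1r_def U1r_def V1r_def Z1r_def min_def)
qed

lemma h1_shape: "h1 N g d t = (d*g)*t^2*(t-N) + 0*t^2 + 0*t + h1 N g d 0"
  by (simp add: h1_def power3_eq_cube power2_eq_square algebra_simps)

lemma h1_two:
  assumes "N \<ge> 4" "d > 0" "g > 0"
  shows "h1 N g d 2 < 0"
proof -
  have e: "h1 N g d 2 = -((N-3)*(d^2*g+d*g^2+d+g)) - (d+g)^2"
    by (simp add: h1_def algebra_simps power2_eq_square)
  have "(N-3)*(d^2*g+d*g^2+d+g) > 0" using assms by (intro mult_pos_pos) (auto intro!: add_pos_pos)
  moreover have "(d+g)^2 \<ge> 0" by simp
  ultimately show ?thesis using e by linarith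
qed

lemma case1:
  assumes n: "n \<ge> 4" and x0: "x 0 = 1" and xp: "\<forall>j\<in>{1..n}. x(j-1) > 0"
    and d: "d > 0" and g: "g > 0" and pe: "perron_eigenvalue n (P_mat x g d) l"
  shows "principal_right_eigenvector n (P_mat x g d) (c1_w n x g d l) \<and>
        (\<exists>c. \<forall>i\<in>{1..n}. c1_w n x g d l i = c * c1_u n x g d l i) \<and>
        (\<exists>c. \<forall>i\<in>{1..n}. c1_w n x g d l i = c * c1_v n x g d l i) \<and>
        (\<exists>c. \<forall>i\<in>{1..n}. c1_w n x g d l i = c * c1_z n x g d l i)"
proof -
  define N where "N = real n"
  have xnz: "\<forall>j\<in>{1..n}. x(j-1) \<noteq> 0" using xp by force
  note Af = Pfac[of x n g d, OF x0]
  have K: "1 \<le> (4::nat)" "4 \<le> n" using n by auto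
  have i4: "(4::nat) \<in> {1..n}" using n by auto
  have x1: "x 1 > 0" using xp[rule_format, of 2] n by auto
  have x2: "x 2 > 0" using xp[rule_format, of 3] n by auto
  have x3: "x 3 > 0" using xp[rule_format, of 4] n by auto
  have N4: "N \<ge> 4" using n by (simp add: N_def)
  have "\<exists>r\<ge>2. h1 N g d r = 0"
  proof (rule poly_root[of "h1 N g d" "d*g" 2 N 0 0 "h1 N g d 0" 2])
    show "\<forall>t. h1 N g d t = d * g * t ^ 2 * (t - N) + 0 * t\<^sup>2 + 0 * t + h1 N g d 0"
      by (rule allI, rule h1_shape)
  qed (use d g h1_two[OF N4 d g] in auto)
  then obtain r where r: "r \<ge> 2" "h1 N g d r = 0" by blast
  have eigr: "\<forall>i\<in>{1..n}. (\<Sum>j=1..n. P_mat x g d i j * (W1r N g d r (min j 4)/x(j-1))) = r * (W1r N g d r (min i 4)/x(i-1))"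
    using lift[OF Af xnz K redW1[OF n d g]] r unfolding N_def by blast
  have "W1r N g d r (min 4 4)/x(4-1) \<noteq> 0" using pos1(1)[OF r(1) d g, of N] x3 by simp
  then have "is_eigenvalue n (P_mat x g d) (complex_of_real r)"
    using to_eig[OF i4 _ eigr] by blast
  then have l2: "l \<ge> 2" using perron_ge[OF pe] r by force
  have h: "h1 N g d l = 0"
  proof -
    have "is_eigenvalue n (P_mat x g d) (complex_of_real l)" using pe by (simp add: perron_eigenvalue_def)
    then obtain u where u1: "\<exists>i\<in>{1..n}. u i \<noteq> 0" and u2: "\<forall>i\<in>{1..n}. (\<Sum>j=1..n. P_mat x g d i j * u j) = l * u i"
      using real_eig by blast
    have l0: "l \<noteq> 0" using l2 by simp
    obtain V where V1: "\<forall>k\<in>{1..4}. redrow n 4 (B1 g d) V k = l * V k" and V2: "\<exists>k\<in>{1..4}. V k \<noteq> 0"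
      using reduce[OF Af xnz K u2 l0 u1] by blast
    show ?thesis using char1[OF n d g l0 V1 V2] unfolding N_def .
  qed
  have eigw: "\<forall>i\<in>{1..n}. (\<Sum>j=1..n. P_mat x g d i j * (W1r N g d l (min j 4)/x(j-1))) = l * (W1r N g d l (min i 4)/x(i-1))"
    using lift[OF Af xnz K redW1[OF n d g]] h unfolding N_def by blast
  note R = rep1[OF x0 xp n, of _ g d l, folded N_def]
  have wR: "\<forall>i\<in>{1..n}. c1_w n x g d l i = W1r N g d l (min i 4) / x(i-1)" using R by blast
  have uR: "\<forall>i\<in>{1..n}. c1_u n x g d l i = x 1 * U1r N g d l (min i 4) / x(i-1)" using R by blast
  have vR: "\<forall>i\<in>{1..n}. c1_v n x g d l i = x 2 * V1r N g d l (min i 4) / x(i-1)" using R by blast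
  have zR: "\<forall>i\<in>{1..n}. c1_z n x g d l i = x 3 * Z1r N g d l (min i 4) / x(i-1)" using R by blast
  note P = pos1[OF l2 d g, of N]
  note Q = prop1[OF h]
  have cu: "\<exists>c. \<forall>i\<in>{1..n}. c1_w n x g d l i = c * c1_u n x g d l i"
    by (rule prop_lemma[OF wR uR _ _ Q(1)]) (use x1 P in auto)
  have cv: "\<exists>c. \<forall>i\<in>{1..n}. c1_w n x g d l i = c * c1_v n x g d l i"
    by (rule prop_lemma[OF wR vR _ _ Q(2)]) (use x2 P in auto)
  have cz: "\<exists>c. \<forall>i\<in>{1..n}. c1_w n x g d l i = c * c1_z n x g d l i"
    by (rule prop_lemma[OF wR zR _ _ Q(3)]) (use x3 P in auto)
  have zpos: "\<forall>i\<in>{1..n}. c1_z n x g d l i > 0"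
  proof
    fix i assume i: "i \<in> {1..n}"
    have "min i 4 = 1 \<or> min i 4 = 2 \<or> min i 4 = 3 \<or> min i (4::nat) = 4" using i by (auto simp: min_def)
    then have "Z1r N g d l (min i 4) > 0" using P by auto
    then show "c1_z n x g d l i > 0" using zR i x3 xp by auto
  qed
  have w4: "c1_w n x g d l 4 > 0" using wR i4 P x3 by auto
  obtain c where c: "\<forall>i\<in>{1..n}. c1_w n x g d l i = c * c1_z n x g d l i" using cz by blast
  have wpos: "\<forall>i\<in>{1..n}. c1_w n x g d l i > 0" by (rule pos_lemma[OF c zpos i4 w4])
  have eq: "\<forall>i\<in>{1..n}. (\<Sum>j=1..n. P_mat x g d i j * c1_w n x g d l j) = l * c1_w n x g d l i"
  proof
    fix i assume i: "i \<in> {1..n}"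
    have "(\<Sum>j=1..n. P_mat x g d i j * c1_w n x g d l j) = (\<Sum>j=1..n. P_mat x g d i j * (W1r N g d l (min j 4)/x(j-1)))"
      by (rule sum.cong) (use wR in auto)
    then show "(\<Sum>j=1..n. P_mat x g d i j * c1_w n x g d l j) = l * c1_w n x g d l i"
      using eigw wR i by auto
  qed
  have "principal_right_eigenvector n (P_mat x g d) (c1_w n x g d l)"
    unfolding principal_right_eigenvector_def using wpos pe eq by blast
  then show ?thesis using cu cv cz by blast
qed

definition B2 :: "real \<Rightarrow> real \<Rightarrow> nat \<Rightarrow> nat \<Rightarrow> real" where
  "B2 g d k m = (if k=1 \<and> m=2 then d else if k=2 \<and> m=1 then 1/d else if k=3 \<and> m=4 then g
     else if k=4 \<and> m=3 then 1/g else 1)"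

lemma Qfac:
  assumes "x 0 = 1" "(K = 4 \<and> n = 4) \<or> K = 5"
  shows "\<forall>i\<in>{1..n}. \<forall>j\<in>{1..n}. Q_mat x g d i j = x(j-1)/x(i-1) * B2 g d (min i K) (min j K)"
  using assms by (auto simp: Q_mat_def B2_def min_def)

definition h2a :: "real \<Rightarrow> real \<Rightarrow> real \<Rightarrow> real" where
  "h2a g d l = l^4*d*g - 4*l^3*d*g - 2*l*d^2*g - 2*l*d*g^2 + 8*l*d*g - 2*l*d - 2*l*g - d^2*g^2 + 2*d^2*g - d^2 + 2*d*g^2 - 4*d*g + 2*d - g^2 + 2*g - 1"

definition W2ar :: "real \<Rightarrow> real \<Rightarrow> real \<Rightarrow> nat \<Rightarrow> real" where
  "W2ar g d l i =
     (if i = 1 then d * (l^3*g - 3*l^2*g - 1 + 2*g - g^2)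
      else if i = 2 then (l^2*g - 2*l*g + d + 2*l*d*g - 2*d*g + d*g^2)
      else if i = 3 then g * (g + l - 1 + d*l^2 - 2*l*d + d + l*d*g - d*g)
      else (1 + l*g - g + l*d - d + d*g*l^2 - 2*l*d*g + d*g))"

definition U2ar :: "real \<Rightarrow> real \<Rightarrow> real \<Rightarrow> nat \<Rightarrow> real" where
  "U2ar g d l i =
     (if i = 1 then (d*g*l^2 - 2*l*d*g + 1 + 2*l*g - 2*g + g^2)
      else if i = 2 then l^3*g - 3*l^2*g - 1 + 2*g - g^2
      else if i = 3 then g * (l*g + l^2 - 2*l - g + 1 + l*d - d + d*g)
      else (l + l^2*g - 2*l*g - 1 + g + d + l*d*g - d*g))"

definition V2ar :: "real \<Rightarrow> real \<Rightarrow> real \<Rightarrow> nat \<Rightarrow> real" where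
  "V2ar g d l i =
     (if i = 1 then d * (1 + l*g - g) * (d + l - 1)
      else if i = 2 then (1 + l*g - g + l*d - d + d*g*l^2 - 2*l*d*g + d*g)
      else if i = 3 then g * (d*l^3 - 3*d*l^2 - 1 + 2*d - d^2)
      else (2*l*d*g + d*l^2 - 2*l*d - 2*d*g + g + d^2*g))"

definition Z2ar :: "real \<Rightarrow> real \<Rightarrow> real \<Rightarrow> nat \<Rightarrow> real" where
  "Z2ar g d l i =
     (if i = 1 then d * (l*g + l^2 - 2*l - g + 1 + l*d - d + d*g)
      else if i = 2 then (g + l - 1 + d*l^2 - 2*l*d + d + l*d*g - d*g)
      else if i = 3 then (2*l*d + d*g*l^2 - 2*l*d*g - 2*d + 1 + d^2)
      else d*l^3 - 3*d*l^2 - 1 + 2*d - d^2)"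

lemma vals2a:
  "W2ar g d l 1 = d * (l^3*g - 3*l^2*g - 1 + 2*g - g^2)"
  "W2ar g d l 2 = (l^2*g - 2*l*g + d + 2*l*d*g - 2*d*g + d*g^2)"
  "W2ar g d l 3 = g * (g + l - 1 + d*l^2 - 2*l*d + d + l*d*g - d*g)"
  "W2ar g d l 4 = (1 + l*g - g + l*d - d + d*g*l^2 - 2*l*d*g + d*g)"
  "U2ar g d l 1 = (d*g*l^2 - 2*l*d*g + 1 + 2*l*g - 2*g + g^2)"
  "U2ar g d l 2 = l^3*g - 3*l^2*g - 1 + 2*g - g^2"
  "U2ar g d l 3 = g * (l*g + l^2 - 2*l - g + 1 + l*d - d + d*g)"
  "U2ar g d l 4 = (l + l^2*g - 2*l*g - 1 + g + d + l*d*g - d*g)"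
  "V2ar g d l 1 = d * (1 + l*g - g) * (d + l - 1)"
  "V2ar g d l 2 = (1 + l*g - g + l*d - d + d*g*l^2 - 2*l*d*g + d*g)"
  "V2ar g d l 3 = g * (d*l^3 - 3*d*l^2 - 1 + 2*d - d^2)"
  "V2ar g d l 4 = (2*l*d*g + d*l^2 - 2*l*d - 2*d*g + g + d^2*g)"
  "Z2ar g d l 1 = d * (l*g + l^2 - 2*l - g + 1 + l*d - d + d*g)"
  "Z2ar g d l 2 = (g + l - 1 + d*l^2 - 2*l*d + d + l*d*g - d*g)"
  "Z2ar g d l 3 = (2*l*d + d*g*l^2 - 2*l*d*g - 2*d + 1 + d^2)"
  "Z2ar g d l 4 = d*l^3 - 3*d*l^2 - 1 + 2*d - d^2"
  by (simp_all add: W2ar_def U2ar_def V2ar_def Z2ar_def)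

lemma red2a_iff:
  assumes "d > 0" "g > 0"
  shows "(\<forall>k\<in>{1..4}. redrow 4 4 (B2 g d) W k = l * W k) \<longleftrightarrow>
    (W 1 + d*W 2 + W 3 + W 4 = l*W 1 \<and>
     W 1 + d*W 2 + d*W 3 + d*W 4 = d*l*W 2 \<and>
     W 1 + W 2 + W 3 + g*W 4 = l*W 3 \<and>
     g*W 1 + g*W 2 + W 3 + g*W 4 = g*l*W 4)"
  unfolding ball4 using assms by (auto simp: redrow4 B2_def field_simps)

lemma char2a:
  assumes d: "d > 0" and g: "g > 0"
    and red: "\<forall>k\<in>{1..4}. redrow 4 4 (B2 g d) V k = l * V k" and nz: "\<exists>k\<in>{1..4}. V k \<noteq> 0"
  shows "h2a g d l = 0"
proof -
  have R: "V 1 + d*V 2 + V 3 + V 4 = l*V 1"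
     "V 1 + d*V 2 + d*V 3 + d*V 4 = d*l*V 2"
     "V 1 + V 2 + V 3 + g*V 4 = l*V 3"
     "g*V 1 + g*V 2 + V 3 + g*V 4 = g*l*V 4"
    using red unfolding red2a_iff[OF d g] by auto
  have "h2a g d l * V 1 = 0" "h2a g d l * V 2 = 0" "h2a g d l * V 3 = 0" "h2a g d l * V 4 = 0"
    unfolding h2a_def using R by algebra+
  then have "\<forall>k\<in>{1..4}. h2a g d l * V k = 0" unfolding ball4 by auto
  then show ?thesis using nz by auto
qed

lemma redW2a:
  assumes d: "d > 0" and g: "g > 0" and h: "h2a g d l = 0"
  shows "\<forall>k\<in>{1..4}. redrow 4 4 (B2 g d) (W2ar g d l) k = l * W2ar g d l k"
  unfolding red2a_iff[OF d g] vals2a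
  by (insert h[unfolded h2a_def], intro conjI; (algebra | simp add: algebra_simps power2_eq_square power3_eq_cube))

lemma prop2a:
  assumes h: "h2a g d l = 0"
  shows "\<forall>k\<in>{1..4}. W2ar g d l k * U2ar g d l 4 = W2ar g d l 4 * U2ar g d l k"
    "\<forall>k\<in>{1..4}. W2ar g d l k * V2ar g d l 2 = W2ar g d l 2 * V2ar g d l k"
    "\<forall>k\<in>{1..4}. W2ar g d l k * Z2ar g d l 1 = W2ar g d l 1 * Z2ar g d l k"
  unfolding ball4 vals2a
  by (insert h[unfolded h2a_def], intro conjI; (algebra | simp add: algebra_simps power2_eq_square power3_eq_cube))+

lemma pos2a:
  assumes l: "l \<ge> 2" and d: "d > 0" and g: "g > 0"
  shows "W2ar g d l 2 > 0" "W2ar g d l 3 > 0" "W2ar g d l 4 > 0"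
    "U2ar g d l 1 > 0" "U2ar g d l 4 > 0" "V2ar g d l 2 > 0" "Z2ar g d l 1 > 0"
proof -
  note L = l2facts[OF l]
  have dg: "d*g > 0" using d g by simp
  have b1: "g*l*(l-2) \<ge> 0" "d*g*(l-1) \<ge> 0" "g*(l-1) \<ge> 0" "d*(l-1) \<ge> 0" "d*(l-1)^2 \<ge> 0"
    "d*g*(l-1)^2 \<ge> 0" "d*g*l*(l-2) \<ge> 0" "l*(l-2) \<ge> 0" "g*(l-1)^2 \<ge> 0" "2*l*g > 0"
    using d g L dg by simp_all
  have sq: "g^2 \<ge> 0" "d*g^2 \<ge> 0" "(g-1)^2 \<ge> 0" using d g by simp_all
  show "W2ar g d l 2 > 0"
  proof -
    have "W2ar g d l 2 = g*l*(l-2) + d + 2*(d*g*(l-1)) + d*g^2" by (simp add: vals2a algebra_simps power2_eq_square)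
    then show ?thesis using b1 sq d by linarith
  qed
  show "W2ar g d l 3 > 0"
  proof -
    have "W2ar g d l 3 = g*(g + (l-1) + d*(l-1)^2 + d*g*(l-1))" by (simp add: vals2a algebra_simps power2_eq_square)
    moreover have "g + (l-1) + d*(l-1)^2 + d*g*(l-1) > 0" using b1 g L by linarith
    ultimately show ?thesis using g by simp
  qed
  show "W2ar g d l 4 > 0"
  proof -
    have "W2ar g d l 4 = 1 + g*(l-1) + d*(l-1) + d*g*(l-1)^2" by (simp add: vals2a algebra_simps power2_eq_square)
    then show ?thesis using b1 by linarith
  qed
  show "V2ar g d l 2 > 0"
  proof -
    have "V2ar g d l 2 = 1 + g*(l-1) + d*(l-1) + d*g*(l-1)^2" by (simp add: vals2a algebra_simps power2_eq_square)
    then show ?thesis using b1 by linarith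
  qed
  show "U2ar g d l 1 > 0"
  proof -
    have "U2ar g d l 1 = d*g*l*(l-2) + (g-1)^2 + 2*l*g" by (simp add: U2ar_def algebra_simps power2_eq_square)
    then show ?thesis using b1 sq by linarith
  qed
  show "U2ar g d l 4 > 0"
  proof -
    have "U2ar g d l 4 = (l-1) + g*(l-1)^2 + d + d*g*(l-1)" by (simp add: vals2a algebra_simps power2_eq_square)
    then show ?thesis using b1 L d by linarith
  qed
  show "Z2ar g d l 1 > 0"
  proof -
    have "Z2ar g d l 1 = d*(l*(l-2) + g*(l-1) + 1 + d*(l-1) + d*g)" by (simp add: Z2ar_def algebra_simps power2_eq_square)
    moreover have "l*(l-2) + g*(l-1) + 1 + d*(l-1) + d*g > 0" using b1 dg by linarith
    ultimately show ?thesis using d by simp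
  qed
qed

lemma rep2a:
  assumes x0: "x 0 = 1" and xp: "\<forall>j\<in>{1..4}. x(j-1) > 0" and i: "i \<in> {1..4}"
  shows "c2a_w x g d l i = W2ar g d l (min i 4) / x(i-1)"
    "c2a_u x g d l i = x 1 * U2ar g d l (min i 4) / x(i-1)"
    "c2a_v x g d l i = x 2 * V2ar g d l (min i 4) / x(i-1)"
    "c2a_z x g d l i = x 3 * Z2ar g d l (min i 4) / x(i-1)"
proof -
  have x1: "x 1 > 0" using xp[rule_format, of 2] by auto
  have x2: "x 2 > 0" using xp[rule_format, of 3] by auto
  have x3: "x 3 > 0" using xp[rule_format, of 4] by auto
  have "i = 1 \<or> i = 2 \<or> i = 3 \<or> i = 4" using i by auto
  then show "c2a_w x g d l i = W2ar g d l (min i 4) / x(i-1)"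
    "c2a_u x g d l i = x 1 * U2ar g d l (min i 4) / x(i-1)"
    "c2a_v x g d l i = x 2 * V2ar g d l (min i 4) / x(i-1)"
    "c2a_z x g d l i = x 3 * Z2ar g d l (min i 4) / x(i-1)"
    using x0 x1 x2 x3
    by (auto simp: c2a_w_def c2a_u_def c2a_v_def c2a_z_def W2ar_def U2ar_def V2ar_def Z2ar_def)
qed

lemma h2a_shape: "h2a g d t = (d*g)*t^3*(t-4) + 0*t^2 + (-2*d^2*g - 2*d*g^2 + 8*d*g - 2*d - 2*g)*t + h2a g d 0"
proof -
  have "t^4 = t*(t*(t*t))" by (simp add: eval_nat_numeral)
  then show ?thesis by (simp add: h2a_def power3_eq_cube power2_eq_square algebra_simps)
qed

lemma h2a_two:
  assumes "d > 0" "g > 0"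
  shows "h2a g d 2 < 0"
proof -
  have e: "h2a g d 2 = -(4*(d^2*g+d*g^2+d+g)) - ((d-1)*(g-1))^2"
    by (simp add: h2a_def algebra_simps power2_eq_square)
  have "4*(d^2*g+d*g^2+d+g) > 0" using assms by (auto intro!: add_pos_pos)
  moreover have "((d-1)*(g-1))^2 \<ge> 0" by simp
  ultimately show ?thesis using e by linarith
qed

lemma pos_via:
  fixes w u :: "nat \<Rightarrow> real"
  assumes "\<forall>i\<in>S. w i = c * u i" "i0 \<in> S" "w i0 > 0" "u i0 > 0" "i \<in> S" "u i > 0"
  shows "w i > 0"
proof -
  have "c > 0" using assms(1-4) by (metis zero_less_mult_pos2)
  then show ?thesis using assms(1,5,6) by auto
qed

lemma case2a:
  assumes n: "n = 4" and x0: "x 0 = 1" and xp: "\<forall>j\<in>{1..n}. x(j-1) > 0"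
    and d: "d > 0" and g: "g > 0" and pe: "perron_eigenvalue n (Q_mat x g d) l"
  shows "principal_right_eigenvector n (Q_mat x g d) (c2a_w x g d l) \<and>
        (\<exists>c. \<forall>i\<in>{1..n}. c2a_w x g d l i = c * c2a_u x g d l i) \<and>
        (\<exists>c. \<forall>i\<in>{1..n}. c2a_w x g d l i = c * c2a_v x g d l i) \<and>
        (\<exists>c. \<forall>i\<in>{1..n}. c2a_w x g d l i = c * c2a_z x g d l i)"
proof -
  have xnz: "\<forall>j\<in>{1..n}. x(j-1) \<noteq> 0" using xp by force
  have Af: "\<forall>i\<in>{1..n}. \<forall>j\<in>{1..n}. Q_mat x g d i j = x(j-1)/x(i-1) * B2 g d (min i 4) (min j 4)"
    using Qfac[of x 4 n g d] x0 n by blast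
  have K: "1 \<le> (4::nat)" "4 \<le> n" using n by auto
  have i4: "(4::nat) \<in> {1..n}" "(2::nat) \<in> {1..n}" "(1::nat) \<in> {1..n}" using n by auto
  have xp4: "\<forall>j\<in>{1..4}. x(j-1) > 0" using xp n by simp
  have x1: "x 1 > 0" using xp[rule_format, of 2] n by auto
  have x2: "x 2 > 0" using xp[rule_format, of 3] n by auto
  have x3: "x 3 > 0" using xp[rule_format, of 4] n by auto
  have "\<exists>r\<ge>2. h2a g d r = 0"
  proof (rule poly_root[of "h2a g d" "d*g" 3 4 0 "-2*d^2*g - 2*d*g^2 + 8*d*g - 2*d - 2*g" "h2a g d 0" 2])
    show "\<forall>t. h2a g d t = d * g * t ^ 3 * (t - 4) + 0 * t\<^sup>2 + (-2*d^2*g - 2*d*g^2 + 8*d*g - 2*d - 2*g) * t + h2a g d 0"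
      by (rule allI, rule h2a_shape)
  qed (use d g h2a_two[OF d g] in auto)
  then obtain r where r: "r \<ge> 2" "h2a g d r = 0" by blast
  have redr: "\<forall>k\<in>{1..4}. redrow n 4 (B2 g d) (W2ar g d r) k = r * W2ar g d r k"
    using redW2a[OF d g r(2)] n by simp
  have eigr: "\<forall>i\<in>{1..n}. (\<Sum>j=1..n. Q_mat x g d i j * (W2ar g d r (min j 4)/x(j-1))) = r * (W2ar g d r (min i 4)/x(i-1))"
    using lift[OF Af xnz K redr] by blast
  have "W2ar g d r (min 2 4)/x(2-1) \<noteq> 0" using pos2a(1)[OF r(1) d g] x1 by simp
  then have "is_eigenvalue n (Q_mat x g d) (complex_of_real r)"
    using to_eig[OF i4(2) _ eigr] by blast
  then have l2: "l \<ge> 2" using perron_ge[OF pe] r by force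
  have h: "h2a g d l = 0"
  proof -
    have "is_eigenvalue n (Q_mat x g d) (complex_of_real l)" using pe by (simp add: perron_eigenvalue_def)
    then obtain u where u1: "\<exists>i\<in>{1..n}. u i \<noteq> 0" and u2: "\<forall>i\<in>{1..n}. (\<Sum>j=1..n. Q_mat x g d i j * u j) = l * u i"
      using real_eig by blast
    have l0: "l \<noteq> 0" using l2 by simp
    obtain V where V1: "\<forall>k\<in>{1..4}. redrow n 4 (B2 g d) V k = l * V k" and V2: "\<exists>k\<in>{1..4}. V k \<noteq> 0"
      using reduce[OF Af xnz K u2 l0 u1] by blast
    show ?thesis using char2a[OF d g _ V2] V1 n by simp
  qed
  have redl: "\<forall>k\<in>{1..4}. redrow n 4 (B2 g d) (W2ar g d l) k = l * W2ar g d l k"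
    using redW2a[OF d g h] n by simp
  have eigw: "\<forall>i\<in>{1..n}. (\<Sum>j=1..n. Q_mat x g d i j * (W2ar g d l (min j 4)/x(j-1))) = l * (W2ar g d l (min i 4)/x(i-1))"
    using lift[OF Af xnz K redl] by blast
  note R = rep2a[OF x0 xp4, of _ g d l]
  have wR: "\<forall>i\<in>{1..n}. c2a_w x g d l i = W2ar g d l (min i 4) / x(i-1)" using R n by blast
  have uR: "\<forall>i\<in>{1..n}. c2a_u x g d l i = x 1 * U2ar g d l (min i 4) / x(i-1)" using R n by blast
  have vR: "\<forall>i\<in>{1..n}. c2a_v x g d l i = x 2 * V2ar g d l (min i 4) / x(i-1)" using R n by blast
  have zR: "\<forall>i\<in>{1..n}. c2a_z x g d l i = x 3 * Z2ar g d l (min i 4) / x(i-1)" using R n by blast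
  note P = pos2a[OF l2 d g]
  note Q = prop2a[OF h]
  have cu: "\<exists>c. \<forall>i\<in>{1..n}. c2a_w x g d l i = c * c2a_u x g d l i"
    by (rule prop_lemma[OF wR uR _ _ Q(1)]) (use x1 P in auto)
  have cv: "\<exists>c. \<forall>i\<in>{1..n}. c2a_w x g d l i = c * c2a_v x g d l i"
    by (rule prop_lemma[OF wR vR _ _ Q(2)]) (use x2 P in auto)
  have cz: "\<exists>c. \<forall>i\<in>{1..n}. c2a_w x g d l i = c * c2a_z x g d l i"
    by (rule prop_lemma[OF wR zR _ _ Q(3)]) (use x3 P in auto)
  obtain c where c: "\<forall>i\<in>{1..n}. c2a_w x g d l i = c * c2a_u x g d l i" using cu by blast
  have w4: "c2a_w x g d l 4 > 0" using wR i4 P x3 by auto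
  have u4: "c2a_u x g d l 4 > 0" using uR i4 P x3 x1 by auto
  have u1: "c2a_u x g d l 1 > 0" using uR i4 P x0 x1 by auto
  have w1: "c2a_w x g d l 1 > 0" by (rule pos_via[OF c i4(1) w4 u4 i4(3) u1])
  have wpos: "\<forall>i\<in>{1..n}. c2a_w x g d l i > 0"
  proof
    fix i assume i: "i \<in> {1..n}"
    then have "i = 1 \<or> i = 2 \<or> i = 3 \<or> i = 4" using n by auto
    then show "c2a_w x g d l i > 0" using w1 wR i P x1 x2 x3 by auto
  qed
  have eq: "\<forall>i\<in>{1..n}. (\<Sum>j=1..n. Q_mat x g d i j * c2a_w x g d l j) = l * c2a_w x g d l i"
  proof
    fix i assume i: "i \<in> {1..n}"
    have "(\<Sum>j=1..n. Q_mat x g d i j * c2a_w x g d l j) = (\<Sum>j=1..n. Q_mat x g d i j * (W2ar g d l (min j 4)/x(j-1)))"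
      by (rule sum.cong) (use wR in auto)
    then show "(\<Sum>j=1..n. Q_mat x g d i j * c2a_w x g d l j) = l * c2a_w x g d l i"
      using eigw wR i by auto
  qed
  have "principal_right_eigenvector n (Q_mat x g d) (c2a_w x g d l)"
    unfolding principal_right_eigenvector_def using wpos pe eq by blast
  then show ?thesis using cu cv cz by blast
qed

lemma redrow5: "n \<ge> 5 \<Longrightarrow> redrow n 5 B W k = B k 1 * W 1 + B k 2 * W 2 + B k 3 * W 3 + B k 4 * W 4 + (real n - 4) * B k 5 * W 5"
  by (simp add: redrow_def numeral_3_eq_3 numeral_2_eq_2 of_nat_diff eval_nat_numeral)

lemma ball5: "(\<forall>k\<in>{1..5::nat}. P k) \<longleftrightarrow> P 1 \<and> P 2 \<and> P 3 \<and> P 4 \<and> P 5"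
proof
  assume "\<forall>k\<in>{1..5::nat}. P k" then show "P 1 \<and> P 2 \<and> P 3 \<and> P 4 \<and> P 5" by auto
next
  assume A: "P 1 \<and> P 2 \<and> P 3 \<and> P 4 \<and> P 5"
  show "\<forall>k\<in>{1..5::nat}. P k"
  proof
    fix k :: nat assume "k \<in> {1..5}"
    then have "k = 1 \<or> k = 2 \<or> k = 3 \<or> k = 4 \<or> k = 5" by auto
    then show "P k" using A by auto
  qed
qed

definition h2b :: "real \<Rightarrow> real \<Rightarrow> real \<Rightarrow> real \<Rightarrow> real" where
  "h2b N g d l = l^5*d*g - l^4*d*g*N - l^2*d^2*g*N + 2*l^2*d^2*g - l^2*d*g^2*N + 2*l^2*d*g^2 + 4*l^2*d*g*N - 8*l^2*d*g - l^2*d*N + 2*l^2*d - l^2*g*N + 2*l^2*g - l*d^2*g^2 + 2*l*d^2*g - l*d^2 + 2*l*d*g^2 - 4*l*d*g + 2*l*d - l*g^2 + 2*l*g - l - d^2*g^2*N + 4*d^2*g^2 + 2*d^2*g*N - 8*d^2*g - d^2*N + 4*d^2 + 2*d*g^2*N - 8*d*g^2 - 4*d*g*N + 16*d*g + 2*d*N - 8*d - g^2*N + 4*g^2 + 2*g*N - 8*g - N + 4"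

definition W2br :: "real \<Rightarrow> real \<Rightarrow> real \<Rightarrow> real \<Rightarrow> nat \<Rightarrow> real" where
  "W2br N g d l i =
     (if i = 1 then d*l*(l^3*g - (N - 1)*l^2*g - (N - 3)*(g^2 - 2*g + 1))
      else if i = 2 then (l^3*g - (N - 2)*l^2*g + (N - 2)*d*g*l^2
                                      + (l*d + (N - 4)*(d - 1))*(g^2 - 2*g + 1))
      else if i = 3 then (g*l) * (g + l - 1 + d*l^2 - 2*l*d + d + l*d*g - d*g)
      else if i = 4 then l * (1 + l*g - g + l*d - d + d*g*l^2 - 2*l*d*g + d*g)
      else (g^2 - 2*g + l^2*g + 1 + l*d - d*g*l^2 - 2*l*d*g + l*g^2*d
                              + l^3*d*g - d + 2*d*g - d*g^2))"

definition U2br :: "real \<Rightarrow> real \<Rightarrow> real \<Rightarrow> real \<Rightarrow> nat \<Rightarrow> real" where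
  "U2br N g d l i =
     (if i = 1 then (l^3*d*g - (N - 2)*d*g*l^2 - (N - 4)*d*(g - 1)^2 + l
                           + (N - 2)*l^2*g - 2*l*g + l*g^2 + (N - 4)*(g - 1)^2)
      else if i = 2 then l * (l^3*g - (N - 1)*l^2*g - (N - 3)*(g - 1)^2)
      else if i = 3 then g * l * (l*g + l^2 - 2*l - g + 1 + d*l - d + d*g)
      else if i = 4 then l * (l + l^2*g - 2*l*g - 1 + g + d + l*d*g - d*g)
      else (l*g^2 - 2*l*g + l^3*g + l - g^2 + 2*g - l^2*g - 1 + d
                                - 2*d*g + d*g^2 + d*g*l^2))"

definition V2br :: "real \<Rightarrow> real \<Rightarrow> real \<Rightarrow> real \<Rightarrow> nat \<Rightarrow> real" where
  "V2br N g d l i =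
     (if i = 1 then d * l * (1 + l*g - g) * (d + l - 1)
      else if i = 2 then l * (1 + l*g - g) * (1 + d*l - d)
      else if i = 3 then g * l * (l^3*d - (N - 1)*d*l^2 - (N - 3)*(d - 1)^2)
      else if i = 4 then (d*l^3 - (N - 2)*d*l^2*(1 - g) - 2*l*d*g
                                        + 2*(N - 4)*d*(1 - g) + l*g + d^2*l*g
                                        + (N - 4)*(-1 + g - d^2 + d^2*g))
      else (1 + l*g - g) * (d*l^2 + 1 - 2*d + d^2))"

definition Z2br :: "real \<Rightarrow> real \<Rightarrow> real \<Rightarrow> real \<Rightarrow> nat \<Rightarrow> real" where
  "Z2br N g d l i =
     (if i = 1 then d * l * (l*g + l^2 - 2*l - g + 1 + d*l - d + d*g)
      else if i = 2 then l * (g + l - 1) * (1 + d*l - d)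
      else if i = 3 then (l^3*d*g - (N - 2)*d*l^2*(g - 1) - 2*d*l
                                        + 2*(N - 4)*d*(g - 1) + l + d^2*l
                                        + (N - 4)*(1 - g + d^2 - d^2*g))
      else if i = 4 then l * (d*l^3 - (N - 1)*d*l^2 - (N - 3)*(d - 1)^2)
      else (d*g*l^2 + l^3*d - d*l^2 - 2*d*l - 2*d*g + 2*d - 1 + g + l
                                + d^2*l - d^2 + d^2*g))"

definition Y2br :: "real \<Rightarrow> real \<Rightarrow> real \<Rightarrow> real \<Rightarrow> nat \<Rightarrow> real" where
  "Y2br N g d l i =
     (if i = 1 then d * l * (g^2 - 2*g + l^2*g + 1) * (d + l - 1)
      else if i = 2 then l * (g^2 - 2*g + l^2*g + 1) * (1 + d*l - d)
      else if i = 3 then g * l * (d*g*l^2 + l^3*d - d*l^2 - 2*d*l - 2*d*g + 2*d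
                                                - 1 + g + l + d^2*l - d^2 + d^2*g)
      else if i = 4 then l * (d*l^2 + l^3*d*g - d*g*l^2 - 2*l*d*g - 2*d + 2*d*g
                                            - g + 1 + l*g + d^2 + d^2*l*g - d^2*g)
      else (g^2 - 2*g + l^2*g + 1) * (d*l^2 + 1 - 2*d + d^2))"

lemma vals2b:
  "W2br N g d l 1 = d*l*(l^3*g - (N - 1)*l^2*g - (N - 3)*(g^2 - 2*g + 1))"
  "W2br N g d l 2 = (l^3*g - (N - 2)*l^2*g + (N - 2)*d*g*l^2 + (l*d + (N - 4)*(d - 1))*(g^2 - 2*g + 1))"
  "W2br N g d l 3 = (g*l) * (g + l - 1 + d*l^2 - 2*l*d + d + l*d*g - d*g)"
  "W2br N g d l 4 = l * (1 + l*g - g + l*d - d + d*g*l^2 - 2*l*d*g + d*g)"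
  "W2br N g d l 5 = (g^2 - 2*g + l^2*g + 1 + l*d - d*g*l^2 - 2*l*d*g + l*g^2*d + l^3*d*g - d + 2*d*g - d*g^2)"
  "U2br N g d l 1 = (l^3*d*g - (N - 2)*d*g*l^2 - (N - 4)*d*(g - 1)^2 + l + (N - 2)*l^2*g - 2*l*g + l*g^2 + (N - 4)*(g - 1)^2)"
  "U2br N g d l 2 = l * (l^3*g - (N - 1)*l^2*g - (N - 3)*(g - 1)^2)"
  "U2br N g d l 3 = g * l * (l*g + l^2 - 2*l - g + 1 + d*l - d + d*g)"
  "U2br N g d l 4 = l * (l + l^2*g - 2*l*g - 1 + g + d + l*d*g - d*g)"
  "U2br N g d l 5 = (l*g^2 - 2*l*g + l^3*g + l - g^2 + 2*g - l^2*g - 1 + d - 2*d*g + d*g^2 + d*g*l^2)"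
  "V2br N g d l 1 = d * l * (1 + l*g - g) * (d + l - 1)"
  "V2br N g d l 2 = l * (1 + l*g - g) * (1 + d*l - d)"
  "V2br N g d l 3 = g * l * (l^3*d - (N - 1)*d*l^2 - (N - 3)*(d - 1)^2)"
  "V2br N g d l 4 = (d*l^3 - (N - 2)*d*l^2*(1 - g) - 2*l*d*g + 2*(N - 4)*d*(1 - g) + l*g + d^2*l*g + (N - 4)*(-1 + g - d^2 + d^2*g))"
  "V2br N g d l 5 = (1 + l*g - g) * (d*l^2 + 1 - 2*d + d^2)"
  "Z2br N g d l 1 = d * l * (l*g + l^2 - 2*l - g + 1 + d*l - d + d*g)"
  "Z2br N g d l 2 = l * (g + l - 1) * (1 + d*l - d)"
  "Z2br N g d l 3 = (l^3*d*g - (N - 2)*d*l^2*(g - 1) - 2*d*l + 2*(N - 4)*d*(g - 1) + l + d^2*l + (N - 4)*(1 - g + d^2 - d^2*g))"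
  "Z2br N g d l 4 = l * (d*l^3 - (N - 1)*d*l^2 - (N - 3)*(d - 1)^2)"
  "Z2br N g d l 5 = (d*g*l^2 + l^3*d - d*l^2 - 2*d*l - 2*d*g + 2*d - 1 + g + l + d^2*l - d^2 + d^2*g)"
  "Y2br N g d l 1 = d * l * (g^2 - 2*g + l^2*g + 1) * (d + l - 1)"
  "Y2br N g d l 2 = l * (g^2 - 2*g + l^2*g + 1) * (1 + d*l - d)"
  "Y2br N g d l 3 = g * l * (d*g*l^2 + l^3*d - d*l^2 - 2*d*l - 2*d*g + 2*d - 1 + g + l + d^2*l - d^2 + d^2*g)"
  "Y2br N g d l 4 = l * (d*l^2 + l^3*d*g - d*g*l^2 - 2*l*d*g - 2*d + 2*d*g - g + 1 + l*g + d^2 + d^2*l*g - d^2*g)"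
  "Y2br N g d l 5 = (g^2 - 2*g + l^2*g + 1) * (d*l^2 + 1 - 2*d + d^2)"
  by (simp_all add: W2br_def U2br_def V2br_def Z2br_def Y2br_def)

lemma red2b_iff:
  assumes "n \<ge> 5" "d > 0" "g > 0"
  shows "(\<forall>k\<in>{1..5}. redrow n 5 (B2 g d) W k = l * W k) \<longleftrightarrow>
    (W 1 + d*W 2 + W 3 + W 4 + (real n-4)*W 5 = l*W 1 \<and>
     W 1 + d*W 2 + d*W 3 + d*W 4 + d*(real n-4)*W 5 = d*l*W 2 \<and>
     W 1 + W 2 + W 3 + g*W 4 + (real n-4)*W 5 = l*W 3 \<and>
     g*W 1 + g*W 2 + W 3 + g*W 4 + g*(real n-4)*W 5 = g*l*W 4 \<and>
     W 1 + W 2 + W 3 + W 4 + (real n-4)*W 5 = l*W 5)"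
  unfolding ball5 using assms by (auto simp: redrow5 B2_def field_simps)

lemma char2b:
  assumes n: "n \<ge> 5" and d: "d > 0" and g: "g > 0"
    and red: "\<forall>k\<in>{1..5}. redrow n 5 (B2 g d) V k = l * V k" and nz: "\<exists>k\<in>{1..5}. V k \<noteq> 0"
  shows "h2b (real n) g d l = 0"
proof -
  define N where "N = real n"
  have R: "V 1 + d*V 2 + V 3 + V 4 + (N-4)*V 5 = l*V 1"
     "V 1 + d*V 2 + d*V 3 + d*V 4 + d*(N-4)*V 5 = d*l*V 2"
     "V 1 + V 2 + V 3 + g*V 4 + (N-4)*V 5 = l*V 3"
     "g*V 1 + g*V 2 + V 3 + g*V 4 + g*(N-4)*V 5 = g*l*V 4"
     "V 1 + V 2 + V 3 + V 4 + (N-4)*V 5 = l*V 5"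
    using red unfolding red2b_iff[OF n d g] N_def by auto
  have "h2b N g d l * V 1 = 0" "h2b N g d l * V 2 = 0" "h2b N g d l * V 3 = 0" "h2b N g d l * V 4 = 0" "h2b N g d l * V 5 = 0"
    unfolding h2b_def using R by algebra+
  then have "\<forall>k\<in>{1..5}. h2b N g d l * V k = 0" unfolding ball5 by auto
  then show ?thesis using nz by (auto simp: N_def)
qed

lemma redW2b:
  assumes n: "n \<ge> 5" and d: "d > 0" and g: "g > 0" and h: "h2b (real n) g d l = 0"
  shows "\<forall>k\<in>{1..5}. redrow n 5 (B2 g d) (W2br (real n) g d l) k = l * W2br (real n) g d l k"
proof -
  define N where "N = real n"
  have h': "h2b N g d l = 0" using h by (simp add: N_def)
  show ?thesis unfolding red2b_iff[OF n d g] N_def[symmetric] vals2b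
    by (insert h'[unfolded h2b_def], intro conjI; (algebra | simp add: algebra_simps power2_eq_square power3_eq_cube))
qed

lemma prop2b:
  assumes h: "h2b N g d l = 0"
  shows "\<forall>k\<in>{1..5}. W2br N g d l k * U2br N g d l 3 = W2br N g d l 3 * U2br N g d l k"
    "\<forall>k\<in>{1..5}. W2br N g d l k * V2br N g d l 5 = W2br N g d l 5 * V2br N g d l k"
    "\<forall>k\<in>{1..5}. W2br N g d l k * Z2br N g d l 1 = W2br N g d l 1 * Z2br N g d l k"
    "\<forall>k\<in>{1..5}. W2br N g d l k * Y2br N g d l 5 = W2br N g d l 5 * Y2br N g d l k"
  unfolding ball5 vals2b
  by (insert h[unfolded h2b_def], intro conjI; (algebra | simp add: algebra_simps power2_eq_square power3_eq_cube))+

lemma pos2b: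
  assumes l: "l \<ge> 2" and d: "d > 0" and g: "g > 0"
  shows "W2br N g d l 3 > 0" "W2br N g d l 4 > 0" "U2br N g d l 3 > 0" "U2br N g d l 5 > 0"
    "V2br N g d l 1 > 0" "V2br N g d l 2 > 0" "V2br N g d l 5 > 0" "Z2br N g d l 1 > 0" "Y2br N g d l 5 > 0"
proof -
  note L = l2facts[OF l]
  have dg: "d*g > 0" using d g by simp
  have b1: "g*l*(l-2) \<ge> 0" "d*g*(l-1) \<ge> 0" "g*(l-1) \<ge> 0" "d*(l-1) \<ge> 0" "d*(l-1)^2 \<ge> 0"
    "d*g*(l-1)^2 \<ge> 0" "d*g*l*(l-2) \<ge> 0" "l*(l-2) \<ge> 0" "g*(l-1)^2 \<ge> 0"
    "(l-1)*(g-1)^2 \<ge> 0" "l^2*g*(l-1) > 0" "d*(g-1)^2 \<ge> 0" "d*g*l^2 > 0" "d*l^2 > 0" "(d-1)^2 \<ge> 0" "l^2*g > 0" "(g-1)^2 \<ge> 0"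
    using d g L dg by simp_all
  have p1: "1 + g*(l-1) > 0" "1 + d*(l-1) > 0" "d + l - 1 > 0" using b1 d L by linarith+
  have p2: "l*(l-2) + g*(l-1) + 1 + d*(l-1) + d*g > 0" using b1 dg by linarith
  have p3: "d*l^2 + (d-1)^2 > 0" "(g-1)^2 + l^2*g > 0" using b1 by linarith+
  show "W2br N g d l 3 > 0"
  proof -
    have "W2br N g d l 3 = (g*l)*(g + (l-1) + d*(l-1)^2 + d*g*(l-1))" by (simp add: vals2b algebra_simps power2_eq_square power3_eq_cube)
    moreover have "g + (l-1) + d*(l-1)^2 + d*g*(l-1) > 0" using b1 g L by linarith
    ultimately show ?thesis using g L by simp
  qed
  show "W2br N g d l 4 > 0"
  proof -
    have "W2br N g d l 4 = l*(1 + g*(l-1) + d*(l-1) + d*g*(l-1)^2)" by (simp add: vals2b algebra_simps power2_eq_square power3_eq_cube)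
    moreover have "1 + g*(l-1) + d*(l-1) + d*g*(l-1)^2 > 0" using b1 by linarith
    ultimately show ?thesis using L by simp
  qed
  show "U2br N g d l 3 > 0"
  proof -
    have "U2br N g d l 3 = (g*l)*(l*(l-2) + g*(l-1) + 1 + d*(l-1) + d*g)" by (simp add: vals2b algebra_simps power2_eq_square power3_eq_cube)
    then show ?thesis using p2 g L by simp
  qed
  show "U2br N g d l 5 > 0"
  proof -
    have "U2br N g d l 5 = (l-1)*(g-1)^2 + l^2*g*(l-1) + d*(g-1)^2 + d*g*l^2" by (simp add: vals2b algebra_simps power2_eq_square power3_eq_cube)
    then show ?thesis using b1 by linarith
  qed
  show "V2br N g d l 1 > 0"
  proof -
    have "V2br N g d l 1 = (d*l)*((1 + g*(l-1))*(d + l - 1))" by (simp add: V2br_def algebra_simps)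
    then show ?thesis using p1 d L by simp
  qed
  show "V2br N g d l 2 > 0"
  proof -
    have "V2br N g d l 2 = l*((1 + g*(l-1))*(1 + d*(l-1)))" by (simp add: vals2b algebra_simps)
    then show ?thesis using p1 L by simp
  qed
  show "V2br N g d l 5 > 0"
  proof -
    have "V2br N g d l 5 = (1 + g*(l-1))*(d*l^2 + (d-1)^2)" by (simp add: vals2b algebra_simps power2_eq_square power3_eq_cube)
    then show ?thesis using p1 p3 by simp
  qed
  show "Z2br N g d l 1 > 0"
  proof -
    have "Z2br N g d l 1 = (d*l)*(l*(l-2) + g*(l-1) + 1 + d*(l-1) + d*g)" by (simp add: Z2br_def algebra_simps power2_eq_square power3_eq_cube)
    then show ?thesis using p2 d L by simp
  qed
  show "Y2br N g d l 5 > 0"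
  proof -
    have "Y2br N g d l 5 = ((g-1)^2 + l^2*g)*(d*l^2 + (d-1)^2)" by (simp add: vals2b algebra_simps power2_eq_square power3_eq_cube)
    then show ?thesis using p3 by simp
  qed
qed

lemma rep2b:
  assumes x0: "x 0 = 1" and xp: "\<forall>j\<in>{1..n}. x(j-1) > 0" and n: "n \<ge> 5" and i: "i \<in> {1..n}"
  shows "c2b_w n x g d l i = W2br (real n) g d l (min i 5) / x(i-1)"
    "c2b_u n x g d l i = x 1 * U2br (real n) g d l (min i 5) / x(i-1)"
    "c2b_v n x g d l i = x 2 * V2br (real n) g d l (min i 5) / x(i-1)"
    "c2b_z n x g d l i = x 3 * Z2br (real n) g d l (min i 5) / x(i-1)"
    "c2b_y n x g d l i = x 4 * Y2br (real n) g d l (min i 5) / x(i-1)"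
proof -
  have x1: "x 1 > 0" using xp[rule_format, of 2] n by auto
  have x2: "x 2 > 0" using xp[rule_format, of 3] n by auto
  have x3: "x 3 > 0" using xp[rule_format, of 4] n by auto
  have x4: "x 4 > 0" using xp[rule_format, of 5] n by auto
  have "i = 1 \<or> i = 2 \<or> i = 3 \<or> i = 4 \<or> i \<ge> 5" using i by auto
  then show "c2b_w n x g d l i = W2br (real n) g d l (min i 5) / x(i-1)"
    "c2b_u n x g d l i = x 1 * U2br (real n) g d l (min i 5) / x(i-1)"
    "c2b_v n x g d l i = x 2 * V2br (real n) g d l (min i 5) / x(i-1)"
    "c2b_z n x g d l i = x 3 * Z2br (real n) g d l (min i 5) / x(i-1)"
    "c2b_y n x g d l i = x 4 * Y2br (real n) g d l (min i 5) / x(i-1)"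
    using x0 x1 x2 x3 x4
    by (auto simp: c2b_w_def c2b_u_def c2b_v_def c2b_z_def c2b_y_def W2br_def U2br_def V2br_def Z2br_def Y2br_def min_def)
qed

lemma h2b_shape: "h2b N g d t = (d*g)*t^4*(t-N) + (0 - d^2*g*N + 2*d^2*g - d*g^2*N + 2*d*g^2 + 4*d*g*N - 8*d*g - d*N + 2*d - g*N + 2*g)*t^2
   + (0 - d^2*g^2 + 2*d^2*g - d^2 + 2*d*g^2 - 4*d*g + 2*d - g^2 + 2*g - 1)*t + h2b N g d 0"
proof -
  have "t^4 = t*(t*(t*t))" "t^5 = t*(t*(t*(t*t)))" by (simp_all add: eval_nat_numeral)
  then show ?thesis by (simp add: h2b_def power3_eq_cube power2_eq_square algebra_simps)
qed

lemma h2b_two: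
  assumes "N \<ge> 5" "d > 0" "g > 0"
  shows "h2b N g d 2 < 0"
proof -
  have e: "h2b N g d 2 = -((N-2)*((d+1)^2*(g+1)^2))"
    by (simp add: h2b_def algebra_simps power2_eq_square eval_nat_numeral)
  have "(N-2)*((d+1)^2*(g+1)^2) > 0" using assms by (intro mult_pos_pos) auto
  then show ?thesis using e by linarith
qed

lemma case2b:
  assumes n: "n \<ge> 5" and x0: "x 0 = 1" and xp: "\<forall>j\<in>{1..n}. x(j-1) > 0"
    and d: "d > 0" and g: "g > 0" and pe: "perron_eigenvalue n (Q_mat x g d) l"
  shows "principal_right_eigenvector n (Q_mat x g d) (c2b_w n x g d l) \<and>
        (\<exists>c. \<forall>i\<in>{1..n}. c2b_w n x g d l i = c * c2b_u n x g d l i) \<and>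
        (\<exists>c. \<forall>i\<in>{1..n}. c2b_w n x g d l i = c * c2b_v n x g d l i) \<and>
        (\<exists>c. \<forall>i\<in>{1..n}. c2b_w n x g d l i = c * c2b_z n x g d l i) \<and>
        (\<exists>c. \<forall>i\<in>{1..n}. c2b_w n x g d l i = c * c2b_y n x g d l i)"
proof -
  define N where "N = real n"
  have xnz: "\<forall>j\<in>{1..n}. x(j-1) \<noteq> 0" using xp by force
  have Af: "\<forall>i\<in>{1..n}. \<forall>j\<in>{1..n}. Q_mat x g d i j = x(j-1)/x(i-1) * B2 g d (min i 5) (min j 5)"
    using Qfac[of x 5 n g d] x0 by blast
  have K: "1 \<le> (5::nat)" "5 \<le> n" using n by auto
  have ii: "(5::nat) \<in> {1..n}" "(3::nat) \<in> {1..n}" "(1::nat) \<in> {1..n}" "(2::nat) \<in> {1..n}" "(4::nat) \<in> {1..n}" using n by auto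
  have x1: "x 1 > 0" using xp[rule_format, of 2] n by auto
  have x2: "x 2 > 0" using xp[rule_format, of 3] n by auto
  have x3: "x 3 > 0" using xp[rule_format, of 4] n by auto
  have x4: "x 4 > 0" using xp[rule_format, of 5] n by auto
  have N5: "N \<ge> 5" using n by (simp add: N_def)
  have "\<exists>r\<ge>2. h2b N g d r = 0"
  proof (rule poly_root[of "h2b N g d" "d*g" 4 N "0 - d^2*g*N + 2*d^2*g - d*g^2*N + 2*d*g^2 + 4*d*g*N - 8*d*g - d*N + 2*d - g*N + 2*g"
        "0 - d^2*g^2 + 2*d^2*g - d^2 + 2*d*g^2 - 4*d*g + 2*d - g^2 + 2*g - 1" "h2b N g d 0" 2])
    show "\<forall>t. h2b N g d t = d * g * t ^ 4 * (t - N) + (0 - d^2*g*N + 2*d^2*g - d*g^2*N + 2*d*g^2 + 4*d*g*N - 8*d*g - d*N + 2*d - g*N + 2*g) * t\<^sup>2 + (0 - d^2*g^2 + 2*d^2*g - d^2 + 2*d*g^2 - 4*d*g + 2*d - g^2 + 2*g - 1) * t + h2b N g d 0"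
      by (rule allI, rule h2b_shape)
  qed (use d g h2b_two[OF N5 d g] in auto)
  then obtain r where r: "r \<ge> 2" "h2b N g d r = 0" by blast
  have eigr: "\<forall>i\<in>{1..n}. (\<Sum>j=1..n. Q_mat x g d i j * (W2br N g d r (min j 5)/x(j-1))) = r * (W2br N g d r (min i 5)/x(i-1))"
    using lift[OF Af xnz K redW2b[OF n d g]] r unfolding N_def by blast
  have "W2br N g d r (min 3 5)/x(3-1) \<noteq> 0" using pos2b(1)[OF r(1) d g, of N] x2 by simp
  then have "is_eigenvalue n (Q_mat x g d) (complex_of_real r)"
    using to_eig[OF ii(2) _ eigr] by blast
  then have l2: "l \<ge> 2" using perron_ge[OF pe] r by force
  have h: "h2b N g d l = 0"
  proof -
    have "is_eigenvalue n (Q_mat x g d) (complex_of_real l)" using pe by (simp add: perron_eigenvalue_def)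
    then obtain u where u1: "\<exists>i\<in>{1..n}. u i \<noteq> 0" and u2: "\<forall>i\<in>{1..n}. (\<Sum>j=1..n. Q_mat x g d i j * u j) = l * u i"
      using real_eig by blast
    have l0: "l \<noteq> 0" using l2 by simp
    obtain V where V1: "\<forall>k\<in>{1..5}. redrow n 5 (B2 g d) V k = l * V k" and V2: "\<exists>k\<in>{1..5}. V k \<noteq> 0"
      using reduce[OF Af xnz K u2 l0 u1] by blast
    show ?thesis using char2b[OF n d g V1 V2] unfolding N_def .
  qed
  have eigw: "\<forall>i\<in>{1..n}. (\<Sum>j=1..n. Q_mat x g d i j * (W2br N g d l (min j 5)/x(j-1))) = l * (W2br N g d l (min i 5)/x(i-1))"
    using lift[OF Af xnz K redW2b[OF n d g]] h unfolding N_def by blast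
  note R = rep2b[OF x0 xp n, of _ g d l, folded N_def]
  have wR: "\<forall>i\<in>{1..n}. c2b_w n x g d l i = W2br N g d l (min i 5) / x(i-1)" using R by blast
  have uR: "\<forall>i\<in>{1..n}. c2b_u n x g d l i = x 1 * U2br N g d l (min i 5) / x(i-1)" using R by blast
  have vR: "\<forall>i\<in>{1..n}. c2b_v n x g d l i = x 2 * V2br N g d l (min i 5) / x(i-1)" using R by blast
  have zR: "\<forall>i\<in>{1..n}. c2b_z n x g d l i = x 3 * Z2br N g d l (min i 5) / x(i-1)" using R by blast
  have yR: "\<forall>i\<in>{1..n}. c2b_y n x g d l i = x 4 * Y2br N g d l (min i 5) / x(i-1)" using R by blast
  note P = pos2b[OF l2 d g, of N]
  note Q = prop2b[OF h]
  have cu: "\<exists>c. \<forall>i\<in>{1..n}. c2b_w n x g d l i = c * c2b_u n x g d l i"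
    by (rule prop_lemma[OF wR uR _ _ Q(1)]) (use x1 P in auto)
  have cv: "\<exists>c. \<forall>i\<in>{1..n}. c2b_w n x g d l i = c * c2b_v n x g d l i"
    by (rule prop_lemma[OF wR vR _ _ Q(2)]) (use x2 P in auto)
  have cz: "\<exists>c. \<forall>i\<in>{1..n}. c2b_w n x g d l i = c * c2b_z n x g d l i"
    by (rule prop_lemma[OF wR zR _ _ Q(3)]) (use x3 P in auto)
  have cy: "\<exists>c. \<forall>i\<in>{1..n}. c2b_w n x g d l i = c * c2b_y n x g d l i"
    by (rule prop_lemma[OF wR yR _ _ Q(4)]) (use x4 P in auto)
  obtain c1 where c1: "\<forall>i\<in>{1..n}. c2b_w n x g d l i = c1 * c2b_u n x g d l i" using cu by blast
  obtain c2 where c2: "\<forall>i\<in>{1..n}. c2b_w n x g d l i = c2 * c2b_v n x g d l i" using cv by blast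
  have xi: "x(i-1) > 0" if "i \<in> {1..n}" for i using xp that by blast
  have w3: "c2b_w n x g d l 3 > 0" using wR ii P x2 by auto
  have w4: "c2b_w n x g d l 4 > 0" using wR ii P x3 by auto
  have u3: "c2b_u n x g d l 3 > 0" using uR ii P x2 x1 by auto
  have wge5: "c2b_w n x g d l i > 0" if i: "i \<in> {1..n}" "i \<ge> 5" for i
  proof -
    have "c2b_u n x g d l i > 0" using uR i P x1 xi[OF i(1)] by auto
    then show ?thesis by (rule pos_via[OF c1 ii(2) w3 u3 i(1)])
  qed
  have w5: "c2b_w n x g d l 5 > 0" using wge5 ii by auto
  have v5: "c2b_v n x g d l 5 > 0" using vR ii P x2 x4 by auto
  have w1: "c2b_w n x g d l 1 > 0"
    by (rule pos_via[OF c2 ii(1) w5 v5 ii(3)]) (use vR ii P x2 x0 in auto)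
  have w2: "c2b_w n x g d l 2 > 0"
    by (rule pos_via[OF c2 ii(1) w5 v5 ii(4)]) (use vR ii P x2 x1 in auto)
  have wpos: "\<forall>i\<in>{1..n}. c2b_w n x g d l i > 0"
  proof
    fix i assume i: "i \<in> {1..n}"
    then have "i = 1 \<or> i = 2 \<or> i = 3 \<or> i = 4 \<or> i \<ge> 5" by auto
    then show "c2b_w n x g d l i > 0" using w1 w2 w3 w4 wge5 i by auto
  qed
  have eq: "\<forall>i\<in>{1..n}. (\<Sum>j=1..n. Q_mat x g d i j * c2b_w n x g d l j) = l * c2b_w n x g d l i"
  proof
    fix i assume i: "i \<in> {1..n}"
    have "(\<Sum>j=1..n. Q_mat x g d i j * c2b_w n x g d l j) = (\<Sum>j=1..n. Q_mat x g d i j * (W2br N g d l (min j 5)/x(j-1)))"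
      by (rule sum.cong) (use wR in auto)
    then show "(\<Sum>j=1..n. Q_mat x g d i j * c2b_w n x g d l j) = l * c2b_w n x g d l i"
      using eigw wR i by auto
  qed
  have "principal_right_eigenvector n (Q_mat x g d) (c2b_w n x g d l)"
    unfolding principal_right_eigenvector_def using wpos pe eq by blast
  then show ?thesis using cu cv cz cy by blast
qed

theorem theorem5:
  fixes n :: nat and x :: "nat \<Rightarrow> real" and g d :: real
  assumes x0: "x 0 = 1"
    and xpos: "\<forall>i\<in>{1..n-1}. x i > 0"
    and gpos: "g > 0" and dpos: "d > 0"
    and g1: "g \<noteq> 1" and d1: "d \<noteq> 1"
  shows
    "(n \<ge> 4 \<longrightarrow> (\<forall>l. perron_eigenvalue n (P_mat x g d) l \<longrightarrow>
        principal_right_eigenvector n (P_mat x g d) (c1_w n x g d l) \<and>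
        (\<exists>c. \<forall>i\<in>{1..n}. c1_w n x g d l i = c * c1_u n x g d l i) \<and>
        (\<exists>c. \<forall>i\<in>{1..n}. c1_w n x g d l i = c * c1_v n x g d l i) \<and>
        (\<exists>c. \<forall>i\<in>{1..n}. c1_w n x g d l i = c * c1_z n x g d l i)))
   \<and> (n = 4 \<longrightarrow> (\<forall>l. perron_eigenvalue n (Q_mat x g d) l \<longrightarrow>
        principal_right_eigenvector n (Q_mat x g d) (c2a_w x g d l) \<and>
        (\<exists>c. \<forall>i\<in>{1..n}. c2a_w x g d l i = c * c2a_u x g d l i) \<and>
        (\<exists>c. \<forall>i\<in>{1..n}. c2a_w x g d l i = c * c2a_v x g d l i) \<and>
        (\<exists>c. \<forall>i\<in>{1..n}. c2a_w x g d l i = c * c2a_z x g d l i)))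
   \<and> (n \<ge> 5 \<longrightarrow> (\<forall>l. perron_eigenvalue n (Q_mat x g d) l \<longrightarrow>
        principal_right_eigenvector n (Q_mat x g d) (c2b_w n x g d l) \<and>
        (\<exists>c. \<forall>i\<in>{1..n}. c2b_w n x g d l i = c * c2b_u n x g d l i) \<and>
        (\<exists>c. \<forall>i\<in>{1..n}. c2b_w n x g d l i = c * c2b_v n x g d l i) \<and>
        (\<exists>c. \<forall>i\<in>{1..n}. c2b_w n x g d l i = c * c2b_z n x g d l i) \<and>
        (\<exists>c. \<forall>i\<in>{1..n}. c2b_w n x g d l i = c * c2b_y n x g d l i)))"
  proof -
  have xp: "\<forall>j\<in>{1..n}. x(j-1) > 0"
  proof
    fix j assume j: "j \<in> {1..n}"
    show "x(j-1) > 0"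
    proof (cases "j = 1")
      case True then show ?thesis using x0 by simp
    next
      case False then have "j - 1 \<in> {1..n-1}" using j by auto
      then show ?thesis using xpos by blast
    qed
  qed
  have A: "(n \<ge> 4 \<longrightarrow> (\<forall>l. perron_eigenvalue n (P_mat x g d) l \<longrightarrow>
        principal_right_eigenvector n (P_mat x g d) (c1_w n x g d l) \<and>
        (\<exists>c. \<forall>i\<in>{1..n}. c1_w n x g d l i = c * c1_u n x g d l i) \<and>
        (\<exists>c. \<forall>i\<in>{1..n}. c1_w n x g d l i = c * c1_v n x g d l i) \<and>
        (\<exists>c. \<forall>i\<in>{1..n}. c1_w n x g d l i = c * c1_z n x g d l i)))"
    apply (intro impI allI)
    apply (rule case1[OF _ x0 xp dpos gpos])
    by assumption+
  have B: "(n = 4 \<longrightarrow> (\<forall>l. perron_eigenvalue n (Q_mat x g d) l \<longrightarrow>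
        principal_right_eigenvector n (Q_mat x g d) (c2a_w x g d l) \<and>
        (\<exists>c. \<forall>i\<in>{1..n}. c2a_w x g d l i = c * c2a_u x g d l i) \<and>
        (\<exists>c. \<forall>i\<in>{1..n}. c2a_w x g d l i = c * c2a_v x g d l i) \<and>
        (\<exists>c. \<forall>i\<in>{1..n}. c2a_w x g d l i = c * c2a_z x g d l i)))"
    apply (intro impI allI)
    apply (rule case2a[OF _ x0 xp dpos gpos])
    by assumption+
  have C: "(n \<ge> 5 \<longrightarrow> (\<forall>l. perron_eigenvalue n (Q_mat x g d) l \<longrightarrow>
        principal_right_eigenvector n (Q_mat x g d) (c2b_w n x g d l) \<and>
        (\<exists>c. \<forall>i\<in>{1..n}. c2b_w n x g d l i = c * c2b_u n x g d l i) \<and>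
        (\<exists>c. \<forall>i\<in>{1..n}. c2b_w n x g d l i = c * c2b_v n x g d l i) \<and>
        (\<exists>c. \<forall>i\<in>{1..n}. c2b_w n x g d l i = c * c2b_z n x g d l i) \<and>
        (\<exists>c. \<forall>i\<in>{1..n}. c2b_w n x g d l i = c * c2b_y n x g d l i)))"
    apply (intro impI allI)
    apply (rule case2b[OF _ x0 xp dpos gpos])
    by assumption+
  show ?thesis by (rule conjI[OF A conjI[OF B C]])
qed

thm_deps theorem5

end
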